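(* Consider the following two-message protocol between Alice and Bob, in which Bob follows the protocol honestly and Alice may deviate arbitrarily. Alice prepares an arbitrary (possibly mixed) state $\rho$ on $A\otimes B_1\otimes B_2$, where $B_1,B_2$ are qubits and $A$ is a finite-dimensional system that Alice keeps (for instance a purifying system), and sends the qubits $B_1B_2$ to Bob. Bob chooses independent, uniformly random bits $y,h_1,h_2,p$. If $y=0$ he applies ${\sf CNOT}$ to $B_1B_2$ with $B_1$ as control; then for $j=1,2$ he applies $\sigma_y$ to $B_j$ if $h_j=1$; then, if $p=1$, he applies $\sigma_z\otimes\sigma_z$ to $B_1B_2$. He returns $B_1B_2$ to Alice. Let $r:=h_1\oplus h_2$ (Bob's output bit). Let $\mathcal M$ be any measurement (POVM) that Alice performs on $A\otimes B_1\otimes B_2$ after receiving the qubits, with outcome $O$. Define $I^{\mathcal M}_y:=I(y;O)$, $I^{\mathcal M}_r:=I(r;O)$ and $I^{\mathcal M}_{y\oplus r}:=I(y\oplus r;O)$ (classical mutual informations, with $y$ uniformly distributed). Then, for every such $\rho$ and every such $\mathcal M$ (the same $\rho$ and $\mathcal M$ in each inequality), $$I^{\mathcal M}_y+I^{\mathcal M}_r\le 1,\qquad I^{\mathcal M}_y+I^{\mathcal M}_{y\oplus r}\le 1,\qquad I^{\mathcal M}_y+\max\bigl(I^{\mathcal M}_r,I^{\mathcal M}_{y\oplus r}\bigr)\le 1 .$$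
   Context: This is the setting of the paper's "Protocol 1" for generating a one-time table (classical correlation with inputs $x$ for Alice, $y$ for Bob and outputs $(x\cdot y)\oplus r$ for Alice, $r$ for Bob). In the honest protocol Alice, with random bits $x,s,t$, prepares $|x\rangle|t\rangle$ if $s=0$ or $|\tilde t\rangle|\tilde x\rangle$ if $s=1$ (where $|\tilde 0\rangle=|+\rangle$, $|\tilde 1\rangle=|-\rangle$), and after receiving the qubits back measures them in the $Z$ basis if $s=0$ or the $X$ basis if $s=1$, outputting the XOR of the two outcomes and $t$; the proposition allows Alice to send an arbitrary state instead. Mutual informations are measured in bits. *)

theory Defs
  imports Complex_Main "Jordan_Normal_Form.Matrix"
begin

definition adjoint :: "complex mat \<Rightarrow> complex mat" where
  "adjoint A = mat (dim_col A) (dim_row A) (\<lambda>(i,j). cnj (A $$ (j,i)))"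

definition mtrace :: "complex mat \<Rightarrow> complex" where
  "mtrace A = (\<Sum>i<dim_row A. A $$ (i,i))"

definition psd :: "nat \<Rightarrow> complex mat \<Rightarrow> bool" where
  "psd n A \<longleftrightarrow> A \<in> carrier_mat n n \<and> adjoint A = A \<and>
     (\<forall>v :: nat \<Rightarrow> complex.
        0 \<le> Re (\<Sum>i<n. \<Sum>j<n. cnj (v i) * A $$ (i,j) * v j))"

definition density :: "nat \<Rightarrow> complex mat \<Rightarrow> bool" where
  "density n \<rho> \<longleftrightarrow> psd n \<rho> \<and> mtrace \<rho> = 1"

definition povm :: "nat \<Rightarrow> complex mat list \<Rightarrow> bool" where
  "povm n Ms \<longleftrightarrow> (\<forall>k<length Ms. psd n (Ms ! k)) \<and>
     (\<forall>i<n. \<forall>j<n. (\<Sum>k<length Ms. (Ms ! k) $$ (i,j)) = (if i = j then 1 else 0))"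

text \<open>Kronecker (tensor) product; the first factor is the most significant index.\<close>
definition kron :: "complex mat \<Rightarrow> complex mat \<Rightarrow> complex mat" where
  "kron A B = mat (dim_row A * dim_row B) (dim_col A * dim_col B)
     (\<lambda>(i,j). A $$ (i div dim_row B, j div dim_col B) * B $$ (i mod dim_row B, j mod dim_col B))"

section \<open>Gates on the two qubits B1 B2 (basis index 2*b1 + b2)\<close>

definition sigma_y :: "complex mat" where
  "sigma_y = mat_of_rows_list 2 [[0, -\<i>], [\<i>, 0]]"

definition sigma_z :: "complex mat" where
  "sigma_z = mat_of_rows_list 2 [[1, 0], [0, -1]]"

definition id2 :: "complex mat" where
  "id2 = 1\<^sub>m 2"

text \<open>CNOT with B1 as control: |b1,b2> maps to |b1, b1 xor b2>.\<close>
definition cnot :: "complex mat" where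
  "cnot = mat_of_rows_list 4 [[1,0,0,0],[0,1,0,0],[0,0,0,1],[0,0,1,0]]"

text \<open>Bob's unitary on B1 B2 for bits y, h1, h2, p (bits as booleans, True = 1).\<close>
definition bob_unitary :: "bool \<Rightarrow> bool \<Rightarrow> bool \<Rightarrow> bool \<Rightarrow> complex mat" where
  "bob_unitary y h1 h2 p =
     (if p then kron sigma_z sigma_z else 1\<^sub>m 4) *
     kron (if h1 then sigma_y else id2) (if h2 then sigma_y else id2) *
     (if \<not> y then cnot else 1\<^sub>m 4)"

definition joint_prob ::
  "nat \<Rightarrow> complex mat \<Rightarrow> complex mat list \<Rightarrow> bool \<times> bool \<times> bool \<times> bool \<Rightarrow> nat \<Rightarrow> real" where
  "joint_prob dA \<rho> Ms \<omega> out =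
     (case \<omega> of (y, h1, h2, p) \<Rightarrow>
       (let V = kron (1\<^sub>m dA) (bob_unitary y h1 h2 p)
        in (1/16) * Re (mtrace ((Ms ! out) * (V * \<rho> * adjoint V)))))"

definition stat_joint ::
  "nat \<Rightarrow> complex mat \<Rightarrow> complex mat list \<Rightarrow> (bool \<times> bool \<times> bool \<times> bool \<Rightarrow> 'x) \<Rightarrow> 'x \<Rightarrow> nat \<Rightarrow> real" where
  "stat_joint dA \<rho> Ms f x out = (\<Sum>\<omega>\<in>{\<omega>. f \<omega> = x}. joint_prob dA \<rho> Ms \<omega> out)"

definition mutual_info :: "'x set \<Rightarrow> 'o set \<Rightarrow> ('x \<Rightarrow> 'o \<Rightarrow> real) \<Rightarrow> real" where
  "mutual_info X Os P =
     (\<Sum>x\<in>X. \<Sum>out\<in>Os.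
        (let pxo = P x out; px = (\<Sum>o'\<in>Os. P x o'); po = (\<Sum>x'\<in>X. P x' out)
         in if pxo = 0 then 0 else pxo * log 2 (pxo / (px * po))))"

definition info_of ::
  "nat \<Rightarrow> complex mat \<Rightarrow> complex mat list \<Rightarrow> (bool \<times> bool \<times> bool \<times> bool \<Rightarrow> bool) \<Rightarrow> real" where
  "info_of dA \<rho> Ms f = mutual_info (UNIV :: bool set) {..<length Ms} (stat_joint dA \<rho> Ms f)"

definition bit_y :: "bool \<times> bool \<times> bool \<times> bool \<Rightarrow> bool" where
  "bit_y \<omega> = (case \<omega> of (y, h1, h2, p) \<Rightarrow> y)"

definition bit_r :: "bool \<times> bool \<times> bool \<times> bool \<Rightarrow> bool" where
  "bit_r \<omega> = (case \<omega> of (y, h1, h2, p) \<Rightarrow> h1 \<noteq> h2)"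

definition bit_y_xor_r :: "bool \<times> bool \<times> bool \<times> bool \<Rightarrow> bool" where
  "bit_y_xor_r \<omega> = (case \<omega> of (y, h1, h2, p) \<Rightarrow> y \<noteq> (h1 \<noteq> h2))"

end

theory Submission
  imports Defs "HOL-Analysis.Convex"
begin


lemma Naux: fixes p::real assumes "0<p" "p\<le>1"
  shows "0 \<le> (1-p)^2/p^2 - 2*(1-p)/p - 2*ln p"
proof -
  let ?N = "\<lambda>p::real. (1-p)^2/p^2 - 2*(1-p)/p - 2*ln p"
  have d: "\<And>x. 0 < x \<Longrightarrow> (?N has_real_derivative (-2*(1-x)^2/x^3)) (at x)"
  proof -
    fix x::real assume x: "0<x"
    show "(?N has_real_derivative (-2*(1-x)^2/x^3)) (at x)"
      using x apply (auto intro!: derivative_eq_intros)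
      by (simp add: field_simps eval_nat_numeral)
  qed
  have "?N 1 \<le> ?N p"
  proof (rule DERIV_nonpos_imp_nonincreasing[of p 1 ?N])
    show "p \<le> 1" using assms by simp
    fix x assume x: "p \<le> x" "x \<le> 1"
    then have "0 < x" using assms by simp
    then show "\<exists>y. DERIV ?N x :> y \<and> y \<le> 0"
      using d[of x] by (intro exI[of _ "-2*(1-x)^2/x^3"]) (auto simp: divide_nonneg_pos)
  qed
  then show ?thesis by simp
qed

lemma a_convex: "convex_on {0<..<1} (\<lambda>p::real. - ln p / (1-p))"
proof (rule f''_ge0_imp_convex)
  show "convex {0<..<1::real}" by simp
  fix x::real assume x: "x \<in> {0<..<1}"
  have x1: "1 - x \<noteq> 0" "x \<noteq> 0" "x \<noteq> 1" using x by auto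
  show "((\<lambda>p::real. - ln p / (1-p)) has_real_derivative (- 1/(x*(1-x)) - ln x/(1-x)^2)) (at x)"
    using x apply (auto intro!: derivative_eq_intros)
    using x1 by (simp add: divide_simps power2_eq_square)
  show "((\<lambda>x. - 1/(x*(1-x)) - ln x/(1-x)^2) has_real_derivative
     (((1-x)^2/x^2 - 2*(1-x)/x - 2*ln x)/(1-x)^3)) (at x)"
    using x apply (auto intro!: derivative_eq_intros)
    using x1 apply (simp add: divide_simps)
    by (simp add: algebra_simps eval_nat_numeral)
  show "0 \<le> ((1-x)^2/x^2 - 2*(1-x)/x - 2*ln x)/(1-x)^3"
    using x Naux[of x] by auto
qed

lemma binent: fixes p::real assumes "0<p" "p<1"
  shows "4*p*(1-p)*ln 2 \<le> -p*ln p - (1-p)*ln(1-p)"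
proof -
  let ?a = "\<lambda>p::real. - ln p / (1-p)"
  have c: "?a ((1 - 1/2) *\<^sub>R p + (1/2) *\<^sub>R (1-p)) \<le> (1 - 1/2) * ?a p + (1/2) * ?a (1-p)"
    by (rule convex_onD[OF a_convex]) (use assms in auto)
  have m: "(1 - 1/2) *\<^sub>R p + (1/2) *\<^sub>R (1-p) = (1/2::real)" by (simp add: field_simps)
  have a2: "?a (1/2) = 2 * ln 2" by (simp add: ln_div)
  have h0: "2 * ln 2 \<le> (1 - 1/2) * ?a p + (1/2) * ?a (1-p)" using c unfolding m a2 .
  have aux: "\<And>l A B::real. 2*l \<le> (1-1/2)*A + 1/2*B \<Longrightarrow> 4*l \<le> A + B" by argo
  have h: "4 * ln 2 \<le> ?a p + ?a (1-p)" by (rule aux[OF h0])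
  have "p*(1-p) * (4 * ln 2) \<le> p*(1-p)*(?a p + ?a (1-p))"
    using h assms by (intro mult_left_mono) auto
  also have "\<dots> = -p*ln p - (1-p)*ln(1-p)" using assms by (simp add: field_simps)
  finally show ?thesis by (simp add: algebra_simps)
qed


lemma info_term:
  fixes a b :: real assumes a: "0 \<le> a" and b: "0 \<le> b" and s: "0 < a + b"
  shows "(if a = 0 then 0 else a * log 2 (a / ((1/2) * (a+b)))) +
         (if b = 0 then 0 else b * log 2 (b / ((1/2) * (a+b)))) \<le> (a-b)^2/(a+b)"
proof (cases "a = 0 \<or> b = 0")
  case True
  then show ?thesis
  proof
    assume a0: "a = 0"
    then have "b > 0" using s by simp
    then show ?thesis using a0 by (simp add: power2_eq_square)
  next
    assume b0: "b = 0"
    then have "a > 0" using s by simp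
    then show ?thesis using b0 by (simp add: power2_eq_square)
  qed
next
  case False
  then have ap: "a > 0" and bp: "b > 0" using a b by auto
  define s where "s = a + b"
  define p where "p = a / s"
  have sp: "s > 0" using s s_def by simp
  have p0: "0 < p" and p1: "p < 1" using ap bp sp by (auto simp: p_def s_def)
  have ea: "a / ((1/2) * (a+b)) = 2 * p" using sp by (simp add: p_def s_def field_simps)
  have eb: "b / ((1/2) * (a+b)) = 2 * (1-p)" using sp by (simp add: p_def s_def field_simps)
  have aa: "a = s * p" and bb: "b = s * (1-p)" using sp by (auto simp: p_def s_def field_simps)
  have l2: "ln 2 > (0::real)" by simp
  have "a * log 2 (2*p) + b * log 2 (2*(1-p)) = s * (1 + (p * ln p + (1-p) * ln (1-p)) / ln 2)"
  proof -
    have g1: "log 2 (2*p) = 1 + ln p / ln 2" using p0 by (simp add: log_def ln_mult add_divide_distrib)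
    have h2: "ln (2*(1-p)) = ln 2 + ln (1-p)" by (rule ln_mult_pos) (use p1 in auto)
    have g2: "log 2 (2*(1-p)) = 1 + ln (1-p) / ln 2" unfolding log_def h2 by (simp add: add_divide_distrib)
    show ?thesis unfolding g1 g2 aa bb using l2 by (simp add: field_simps)
  qed
  also have "\<dots> \<le> s * (1 - 4*p*(1-p))"
  proof -
    have "(p * ln p + (1-p) * ln (1-p)) / ln 2 \<le> - 4*p*(1-p)"
      using binent[OF p0 p1] l2 by (simp add: divide_simps)
    then show ?thesis using sp by (intro mult_left_mono) auto
  qed
  also have "\<dots> = (a-b)^2/(a+b)" using sp unfolding aa bb s_def[symmetric]
    by (simp add: field_simps power2_eq_square)
  finally show ?thesis using ap bp ea eb by simp
qed


definition psdf :: "nat \<Rightarrow> (nat \<Rightarrow> nat \<Rightarrow> complex) \<Rightarrow> bool" where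
  "psdf n B \<longleftrightarrow> (\<forall>i<n. \<forall>j<n. B j i = cnj (B i j)) \<and>
     (\<forall>v :: nat \<Rightarrow> complex. 0 \<le> Re (\<Sum>i<n. \<Sum>j<n. cnj (v i) * B i j * v j))"

definition qf :: "nat \<Rightarrow> (nat \<Rightarrow> nat \<Rightarrow> complex) \<Rightarrow> (nat \<Rightarrow> complex) \<Rightarrow> complex" where
  "qf n B v = (\<Sum>i<n. \<Sum>j<n. cnj (v i) * B i j * v j)"

lemma qf_Suc: "qf (Suc n) B v = qf n B v + (\<Sum>i<n. cnj (v i) * B i n * v n)
   + (\<Sum>j<n. cnj (v n) * B n j * v j) + cnj (v n) * B n n * v n"
  unfolding qf_def by (simp add: sum.distrib add_ac)

lemma qf_cong: "(\<And>i. i < n \<Longrightarrow> v i = w i) \<Longrightarrow> qf n B v = qf n B w"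
  unfolding qf_def by (intro sum.cong refl) auto

lemma qf_supp: assumes S: "S \<subseteq> {..<n}" and v: "\<And>k. k \<notin> S \<Longrightarrow> v k = 0"
  shows "qf n B v = (\<Sum>i\<in>S. \<Sum>j\<in>S. cnj (v i) * B i j * v j)"
proof -
  have inner: "\<And>i. (\<Sum>j<n. cnj (v i) * B i j * v j) = (\<Sum>j\<in>S. cnj (v i) * B i j * v j)"
    by (rule sum.mono_neutral_right) (use S v in auto)
  have "qf n B v = (\<Sum>i<n. \<Sum>j\<in>S. cnj (v i) * B i j * v j)" unfolding qf_def inner ..
  also have "\<dots> = (\<Sum>i\<in>S. \<Sum>j\<in>S. cnj (v i) * B i j * v j)"
    by (rule sum.mono_neutral_right) (use S v in auto)
  finally show ?thesis .
qed

lemma qf_single: assumes "i < n" shows "qf n B (\<lambda>k. if k = i then 1 else 0) = B i i"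
  by (subst qf_supp[of "{i}"]) (use assms in auto)

lemma qf_two: assumes "i < n" "j < n" "i \<noteq> j"
  shows "qf n B (\<lambda>k. if k = i then s else if k = j then t else 0) =
     cnj s * B i i * s + cnj s * B i j * t + cnj t * B j i * s + cnj t * B j j * t"
  by (subst qf_supp[of "{i,j}"]) (use assms in auto)

lemma psdfD: assumes "psdf n B"
  shows "\<And>i j. i<n \<Longrightarrow> j<n \<Longrightarrow> B j i = cnj (B i j)" and "\<And>v. 0 \<le> Re (qf n B v)"
  using assms unfolding psdf_def qf_def by blast+

lemma psdf_diag: assumes "psdf n B" "i < n" shows "B i i = complex_of_real (Re (B i i))" "0 \<le> Re (B i i)"
proof -
  have "B i i = cnj (B i i)" using psdfD(1)[OF assms(1) assms(2) assms(2)] .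
  then show "B i i = complex_of_real (Re (B i i))" by (simp add: complex_eq_iff)
  show "0 \<le> Re (B i i)" using psdfD(2)[OF assms(1), of "\<lambda>k. if k = i then 1 else 0"] qf_single[OF assms(2)] by simp
qed

lemma psdf_restrict: assumes "psdf (Suc n) B" shows "psdf n B"
  unfolding psdf_def
proof (intro conjI allI impI)
  fix i j assume "i < n" "j < n"
  then show "B j i = cnj (B i j)" using psdfD(1)[OF assms, of i j] by simp
next
  fix v :: "nat \<Rightarrow> complex"
  let ?w = "\<lambda>k. if k = n then 0 else v k"
  have "qf (Suc n) B ?w = qf n B ?w" by (simp add: qf_Suc)
  also have "\<dots> = qf n B v" by (rule qf_cong) simp
  finally show "0 \<le> Re (\<Sum>i<n. \<Sum>j<n. cnj (v i) * B i j * v j)"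
    using psdfD(2)[OF assms, of ?w] unfolding qf_def by simp
qed

lemma psdf_zero_col: assumes B: "psdf N B" and n: "n < N" and i: "i < N" and z: "B n n = 0"
  shows "B i n = 0"
proof (cases "i = n")
  case True then show ?thesis using z by simp
next
  case False
  define c where "c = B i n"
  define d where "d = Re (B i i)"
  have d0: "0 \<le> d" using psdf_diag(2)[OF B i] d_def by simp
  have Bii: "B i i = complex_of_real d" using psdf_diag(1)[OF B i] d_def by simp
  have Bni: "B n i = cnj c" using psdfD(1)[OF B i n] c_def by simp
  define r where "r = 1 / (d + 1)"
  have r0: "0 < r" using d0 r_def by simp
  have rd: "r * d < 1" using d0 unfolding r_def by (simp add: field_simps)
  let ?s = "- (complex_of_real r * c)"
  have q: "qf N B (\<lambda>k. if k = i then ?s else if k = n then 1 else 0) =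
     cnj ?s * B i i * ?s + cnj ?s * B i n * 1 + cnj 1 * B n i * ?s + cnj 1 * B n n * 1"
    by (rule qf_two[OF i n False])
  have "Re (qf N B (\<lambda>k. if k = i then ?s else if k = n then 1 else 0)) =
        r * (r * d - 2) * ((Re c)^2 + (Im c)^2)"
    unfolding q Bii Bni z c_def[symmetric] by (simp add: algebra_simps power2_eq_square)
  then have "0 \<le> r * (r * d - 2) * ((Re c)^2 + (Im c)^2)" using psdfD(2)[OF B] by metis
  moreover have "r * (r * d - 2) < 0" using r0 rd by (simp add: mult_pos_neg)
  ultimately have x0: "(Re c)^2 + (Im c)^2 \<le> 0"
    by (metis mult_neg_pos not_le)
  have "(Re c)^2 = 0" "(Im c)^2 = 0" using x0 zero_le_power2[of "Re c"] zero_le_power2[of "Im c"] by linarith+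
  then have "Re c = 0" "Im c = 0" by simp_all
  then show ?thesis using c_def by (simp add: complex_eq_iff)
qed


lemma cnj_sum_c: "cnj (\<Sum>i\<in>A. f i) = (\<Sum>i\<in>A. cnj (f i))"
  by (induction A rule: infinite_finite_induct) auto

lemma psdf_schur:
  assumes B: "psdf (Suc n) B" and d: "0 < Re (B n n)"
  defines "u \<equiv> \<lambda>i. B i n / complex_of_real (sqrt (Re (B n n)))"
  shows "psdf n (\<lambda>i j. B i j - u i * cnj (u j))"
  unfolding psdf_def
proof (intro conjI allI impI)
  fix i j assume ij: "i < n" "j < n"
  have "B j i = cnj (B i j)" using psdfD(1)[OF B, of i j] ij by simp
  then show "B j i - u j * cnj (u i) = cnj (B i j - u i * cnj (u j))" by simp
next
  fix v :: "nat \<Rightarrow> complex"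
  define dd where "dd = Re (B n n)"
  have Bnn: "B n n = complex_of_real dd" using psdf_diag(1)[OF B, of n] dd_def by simp
  define c where "c = (\<Sum>j<n. B n j * v j)"
  define w where "w = (\<lambda>k. if k = n then - c / complex_of_real dd else v k)"
  have dd0: "dd > 0" using d dd_def by simp
  have herm: "\<And>i. i < n \<Longrightarrow> B i n = cnj (B n i)" using psdfD(1)[OF B] by (metis lessI less_SucI)
  have s1: "(\<Sum>i<n. cnj (w i) * B i n * w n) = w n * cnj c"
  proof -
    have "(\<Sum>i<n. cnj (w i) * B i n * w n) = (\<Sum>i<n. w n * cnj (B n i * v i))"
      by (intro sum.cong refl) (simp add: w_def herm)
    also have "\<dots> = w n * cnj c" unfolding c_def by (simp add: sum_distrib_left cnj_sum_c)
    finally show ?thesis .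
  qed
  have s2: "(\<Sum>j<n. cnj (w n) * B n j * w j) = cnj (w n) * c"
    unfolding c_def by (simp add: sum_distrib_left w_def mult.assoc)
  have q1: "qf (Suc n) B w = qf n B v - c * cnj c / complex_of_real dd"
  proof -
    have e1: "qf n B w = qf n B v" by (rule qf_cong) (simp add: w_def)
    have wn: "w n = - c / complex_of_real dd" by (simp add: w_def)
    show ?thesis unfolding qf_Suc s1 s2 Bnn e1 unfolding wn using dd0
      by (simp add: field_simps)
  qed
  have su: "(\<Sum>j<n. cnj (u j) * v j) = c / complex_of_real (sqrt dd)"
  proof -
    have "(\<Sum>j<n. cnj (u j) * v j) = (\<Sum>j<n. B n j * v j / complex_of_real (sqrt dd))"
      by (intro sum.cong refl) (simp add: u_def herm dd_def)
    then show ?thesis unfolding c_def by (simp add: sum_divide_distrib)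
  qed
  have q2: "(\<Sum>i<n. \<Sum>j<n. cnj (v i) * (B i j - u i * cnj (u j)) * v j) = qf n B v - c * cnj c / complex_of_real dd"
  proof -
    have "(\<Sum>i<n. \<Sum>j<n. cnj (v i) * (B i j - u i * cnj (u j)) * v j) =
        qf n B v - (\<Sum>i<n. \<Sum>j<n. cnj (cnj (u i) * v i) * (cnj (u j) * v j))"
      unfolding qf_def by (simp add: algebra_simps sum_subtractf)
    also have "(\<Sum>i<n. \<Sum>j<n. cnj (cnj (u i) * v i) * (cnj (u j) * v j)) =
        cnj (\<Sum>i<n. cnj (u i) * v i) * (\<Sum>j<n. cnj (u j) * v j)"
      unfolding cnj_sum_c sum_product by simp
    also have "\<dots> = c * cnj c / complex_of_real dd"
    proof -
      have sq: "complex_of_real (sqrt dd) * complex_of_real (sqrt dd) = complex_of_real dd"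
        using dd0 by (simp flip: of_real_mult)
      show ?thesis unfolding su using dd0 sq by (simp add: field_simps)
    qed
    finally show ?thesis .
  qed
  show "0 \<le> Re (\<Sum>i<n. \<Sum>j<n. cnj (v i) * (B i j - u i * cnj (u j)) * v j)"
    unfolding q2 q1[symmetric] by (rule psdfD(2)[OF B])
qed


lemma psdf_decomp: "psdf n B \<Longrightarrow> \<exists>vs. \<forall>i<n. \<forall>j<n. B i j = (\<Sum>k<n. vs k i * cnj (vs k j))"
proof (induction n arbitrary: B)
  case 0 then show ?case by simp
next
  case (Suc n)
  note B = Suc.prems
  define dd where "dd = Re (B n n)"
  have Bnn: "B n n = complex_of_real dd" using psdf_diag(1)[OF B, of n] dd_def by simp
  have dd0: "0 \<le> dd" using psdf_diag(2)[OF B, of n] dd_def by simp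
  show ?case
  proof (cases "dd = 0")
    case True
    have col: "\<And>i. i < Suc n \<Longrightarrow> B i n = 0"
      using psdf_zero_col[OF B, of n] Bnn True by simp
    have row: "\<And>j. j < Suc n \<Longrightarrow> B n j = 0"
    proof -
      fix j assume j: "j < Suc n"
      have "B n j = cnj (B j n)" using psdfD(1)[OF B j, of n] by simp
      then show "B n j = 0" using col[OF j] by simp
    qed
    obtain vs where vs: "\<forall>i<n. \<forall>j<n. B i j = (\<Sum>k<n. vs k i * cnj (vs k j))"
      using Suc.IH[OF psdf_restrict[OF B]] by blast
    define ws where "ws = (\<lambda>k i. if k < n \<and> i < n then vs k i else 0)"
    show ?thesis
    proof (intro exI allI impI)
      fix i j assume i: "i < Suc n" and j: "j < Suc n"
      show "B i j = (\<Sum>k<Suc n. ws k i * cnj (ws k j))"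
      proof (cases "i < n \<and> j < n")
        case True
        then show ?thesis using vs by (simp add: ws_def)
      next
        case False
        then have "i = n \<or> j = n" using i j by auto
        then have "B i j = 0" using row[OF j] col[OF i] by auto
        moreover have "(\<Sum>k<Suc n. ws k i * cnj (ws k j)) = 0"
          using False by (intro sum.neutral) (auto simp: ws_def)
        ultimately show ?thesis by simp
      qed
    qed
  next
    case False
    then have ddp: "0 < dd" using dd0 by simp
    define u where "u = (\<lambda>i. B i n / complex_of_real (sqrt (Re (B n n))))"
    have P: "psdf n (\<lambda>i j. B i j - u i * cnj (u j))"
      unfolding u_def by (rule psdf_schur[OF B]) (use ddp dd_def in simp)
    obtain vs where vs: "\<forall>i<n. \<forall>j<n. B i j - u i * cnj (u j) = (\<Sum>k<n. vs k i * cnj (vs k j))"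
      using Suc.IH[OF P] by blast
    define ws where "ws = (\<lambda>k i. if k < n then (if i < n then vs k i else 0) else u i)"
    have sq: "complex_of_real (sqrt dd) * complex_of_real (sqrt dd) = complex_of_real dd"
      using ddp by (simp flip: of_real_mult)
    have un: "u n = complex_of_real (sqrt dd)"
      unfolding u_def Bnn dd_def[symmetric] using ddp sq by (simp add: field_simps)
    show ?thesis
    proof (intro exI allI impI)
      fix i j assume i: "i < Suc n" and j: "j < Suc n"
      have e: "(\<Sum>k<Suc n. ws k i * cnj (ws k j)) =
          (\<Sum>k<n. (if i < n then vs k i else 0) * cnj (if j < n then vs k j else 0)) + u i * cnj (u j)"
        by (simp add: ws_def)
      show "B i j = (\<Sum>k<Suc n. ws k i * cnj (ws k j))"
      proof (cases "i < n \<and> j < n")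
        case True
        then have h: "B i j - u i * cnj (u j) = (\<Sum>k<n. vs k i * cnj (vs k j))" using vs by blast
        have "B i j = (\<Sum>k<n. vs k i * cnj (vs k j)) + u i * cnj (u j)"
          using h by (metis diff_add_cancel)
        then show ?thesis unfolding e using True by simp
      next
        case False
        have z: "(\<Sum>k<n. (if i < n then vs k i else 0) * cnj (if j < n then vs k j else 0)) = 0"
          using False by (intro sum.neutral) auto
        have "B i j = u i * cnj (u j)"
        proof (cases "i = n")
          case True
          have "B n j = cnj (B j n)" using psdfD(1)[OF B j, of n] by simp
          then show ?thesis using True un sq ddp unfolding u_def Bnn dd_def[symmetric]
            by (simp add: field_simps Bnn)
        next
          case False
          then have jn: "j = n" using \<open>\<not> (i < n \<and> j < n)\<close> i j by auto
          show ?thesis using jn un sq ddp unfolding u_def Bnn dd_def[symmetric]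
            by (simp add: field_simps Bnn)
        qed
        then show ?thesis unfolding e z by simp
      qed
    qed
  qed
qed


definition Fm :: "nat \<Rightarrow> complex mat \<Rightarrow> complex mat \<Rightarrow> (nat \<Rightarrow> nat \<Rightarrow> complex) \<Rightarrow> (nat \<Rightarrow> nat \<Rightarrow> complex) \<Rightarrow> complex" where
  "Fm N M R U W = (\<Sum>i<N. \<Sum>j<N. \<Sum>b3<4. \<Sum>b4<4.
      M $$ (i,j) * R $$ (4*(j div 4)+b3, 4*(i div 4)+b4) * U (j mod 4) b3 * cnj (W (i mod 4) b4))"

definition Phi :: "nat \<Rightarrow> complex mat \<Rightarrow> complex mat \<Rightarrow> (nat \<Rightarrow> nat \<Rightarrow> nat \<Rightarrow> nat \<Rightarrow> complex) \<Rightarrow> complex" where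
  "Phi N M R T = (\<Sum>i<N. \<Sum>j<N. \<Sum>b3<4. \<Sum>b4<4.
      M $$ (i,j) * R $$ (4*(j div 4)+b3, 4*(i div 4)+b4) * T (i mod 4) (j mod 4) b3 b4)"

lemma Fm_Phi: "Fm N M R U W = Phi N M R (\<lambda>b1 b2 b3 b4. U b2 b3 * cnj (W b1 b4))"
  unfolding Fm_def Phi_def by (simp add: mult.assoc)

lemma Phi_add: "Phi N M R (\<lambda>b1 b2 b3 b4. T1 b1 b2 b3 b4 + T2 b1 b2 b3 b4) = Phi N M R T1 + Phi N M R T2"
  unfolding Phi_def by (simp add: distrib_left sum.distrib)

lemma Phi_scale: "Phi N M R (\<lambda>b1 b2 b3 b4. c * T b1 b2 b3 b4) = c * Phi N M R T"
  unfolding Phi_def by (simp add: sum_distrib_left mult.left_commute)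

lemma Phi_zero: "Phi N M R (\<lambda>b1 b2 b3 b4. 0) = 0"
  unfolding Phi_def by simp

lemma Phi_cong: "(\<And>b1 b2 b3 b4. b1 < 4 \<Longrightarrow> b2 < 4 \<Longrightarrow> b3 < 4 \<Longrightarrow> b4 < 4 \<Longrightarrow> T b1 b2 b3 b4 = T' b1 b2 b3 b4)
   \<Longrightarrow> Phi N M R T = Phi N M R T'"
  unfolding Phi_def by (intro sum.cong refl) simp

lemma Phi_sum: "finite A \<Longrightarrow> Phi N M R (\<lambda>b1 b2 b3 b4. \<Sum>l\<in>A. T l b1 b2 b3 b4) = (\<Sum>l\<in>A. Phi N M R (T l))"
proof (induction A rule: finite_induct)
  case empty then show ?case by (simp add: Phi_zero)
next
  case (insert x F)
  have "Phi N M R (\<lambda>b1 b2 b3 b4. \<Sum>l\<in>insert x F. T l b1 b2 b3 b4) =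
        Phi N M R (\<lambda>b1 b2 b3 b4. T x b1 b2 b3 b4 + (\<Sum>l\<in>F. T l b1 b2 b3 b4))"
    using insert by simp
  also have "\<dots> = Phi N M R (T x) + Phi N M R (\<lambda>b1 b2 b3 b4. \<Sum>l\<in>F. T l b1 b2 b3 b4)"
    by (rule Phi_add)
  finally show ?case using insert by simp
qed

lemma Fm_add1: "Fm N M R (\<lambda>i j. U i j + c * U' i j) W = Fm N M R U W + c * Fm N M R U' W"
  unfolding Fm_Phi by (simp add: distrib_right mult.assoc Phi_add Phi_scale)

lemma Fm_add2: "Fm N M R U (\<lambda>i j. W i j + c * W' i j) = Fm N M R U W + cnj c * Fm N M R U W'"
  unfolding Fm_Phi by (simp add: distrib_left mult.left_commute Phi_add Phi_scale)

lemma quad_disc: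
  fixes a b c :: real
  assumes "\<And>t. 0 \<le> a + b * t + c * t^2" and "0 \<le> c"
  shows "b^2 \<le> 4 * a * c"
proof (cases "c = 0")
  case True
  have "b = 0"
  proof (rule ccontr)
    assume b: "b \<noteq> 0"
    have "0 \<le> a + b * (-(a+1)/b) + c * (-(a+1)/b)^2" by (rule assms(1))
    then show False using b True by (simp add: field_simps)
  qed
  then show ?thesis using True by simp
next
  case False
  then have c: "c > 0" using assms(2) by simp
  have "0 \<le> a + b * (-b/(2*c)) + c * (-b/(2*c))^2" by (rule assms(1))
  then have "0 \<le> a - b^2/(4*c)" using c by (simp add: field_simps power2_eq_square)
  then show ?thesis using c by (simp add: field_simps)
qed

lemma CS4:
  assumes pos: "\<And>U. 0 \<le> Re (Fm N M R U U)"
  shows "(\<Sum>c<(4::nat). Re (Fm N M R (X c) (Y c) + Fm N M R (Y c) (X c)))^2 \<le>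
     4 * (\<Sum>c<(4::nat). Re (Fm N M R (X c) (X c))) * (\<Sum>c<(4::nat). Re (Fm N M R (Y c) (Y c)))"
proof (rule quad_disc)
  fix t :: real
  have e: "Re (Fm N M R (\<lambda>i j. X c i j + complex_of_real t * Y c i j) (\<lambda>i j. X c i j + complex_of_real t * Y c i j))
     = Re (Fm N M R (X c) (X c)) + t * Re (Fm N M R (X c) (Y c) + Fm N M R (Y c) (X c)) + t^2 * Re (Fm N M R (Y c) (Y c))" for c
    unfolding Fm_add1 Fm_add2 by (simp add: algebra_simps power2_eq_square)
  have "0 \<le> (\<Sum>c<(4::nat). Re (Fm N M R (\<lambda>i j. X c i j + complex_of_real t * Y c i j) (\<lambda>i j. X c i j + complex_of_real t * Y c i j)))"
    by (intro sum_nonneg pos)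
  also have "\<dots> = (\<Sum>c<(4::nat). Re (Fm N M R (X c) (X c))) + (\<Sum>c<(4::nat). Re (Fm N M R (X c) (Y c) + Fm N M R (Y c) (X c))) * t
       + (\<Sum>c<(4::nat). Re (Fm N M R (Y c) (Y c))) * t^2"
    unfolding e by (simp add: sum.distrib sum_distrib_left sum_distrib_right algebra_simps)
  finally show "0 \<le> (\<Sum>c<(4::nat). Re (Fm N M R (X c) (X c))) + (\<Sum>c<(4::nat). Re (Fm N M R (X c) (Y c) + Fm N M R (Y c) (X c))) * t
       + (\<Sum>c<(4::nat). Re (Fm N M R (Y c) (Y c))) * t^2" .
next
  show "0 \<le> (\<Sum>c<(4::nat). Re (Fm N M R (Y c) (Y c)))" by (intro sum_nonneg pos)
qed


lemma mult_entry: "A \<in> carrier_mat n m \<Longrightarrow> B \<in> carrier_mat m p \<Longrightarrow> i < n \<Longrightarrow> j < p \<Longrightarrow>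
   (A * B) $$ (i,j) = (\<Sum>k<m. A $$ (i,k) * B $$ (k,j))"
  by (auto simp: scalar_prod_def lessThan_atLeast0 intro!: sum.cong)

lemma blocksum:
  fixes g :: "nat \<Rightarrow> 'a::comm_monoid_add"
  assumes j: "j < d*4"
  shows "(\<Sum>k<d*4. (if k div 4 = j div 4 then g k else 0)) = (\<Sum>b<4. g (4*(j div 4)+b))"
proof -
  let ?q = "j div 4"
  have q: "?q < d" using j by simp
  have img: "(\<lambda>b. 4*?q+b) ` {..<4} \<subseteq> {..<d*4}" using q by auto
  have "(\<Sum>k<d*4. (if k div 4 = ?q then g k else 0)) = (\<Sum>k\<in>(\<lambda>b. 4*?q+b) ` {..<4}. (if k div 4 = ?q then g k else 0))"
  proof (rule sum.mono_neutral_right[OF _ img])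
    show "finite {..<d*4}" by simp
    show "\<forall>i\<in>{..<d * 4} - (\<lambda>b. 4 * (j div 4) + b) ` {..<4}. (if i div 4 = j div 4 then g i else 0) = 0"
    proof
      fix k assume k: "k \<in> {..<d * 4} - (\<lambda>b. 4 * (j div 4) + b) ` {..<4}"
      show "(if k div 4 = j div 4 then g k else 0) = 0"
      proof (cases "k div 4 = j div 4")
        case True
        then have "k = 4 * (j div 4) + k mod 4" by (metis div_mult_mod_eq mult.commute)
        moreover have "k mod 4 < 4" by simp
        ultimately have "k \<in> (\<lambda>b. 4 * (j div 4) + b) ` {..<4}" by blast
        then show ?thesis using k by blast
      qed simp
    qed
  qed
  also have "\<dots> = (\<Sum>b<4. (if (4*?q+b) div 4 = ?q then g (4*?q+b) else 0))"
    by (subst sum.reindex) (auto simp: inj_on_def)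
  also have "\<dots> = (\<Sum>b<4. g (4*?q+b))" by (intro sum.cong refl) simp
  finally show ?thesis .
qed

lemma kron_id_entry:
  assumes B: "B \<in> carrier_mat 4 4" and j: "j < d*4" and k: "k < d*4"
  shows "kron (1\<^sub>m d) B $$ (j,k) = (if k div 4 = j div 4 then B $$ (j mod 4, k mod 4) else 0)"
proof -
  have "j div 4 < d" "k div 4 < d" using j k by auto
  then show ?thesis using B j k unfolding kron_def by auto
qed

lemma kron_carrier: "B \<in> carrier_mat 4 4 \<Longrightarrow> kron (1\<^sub>m d) B \<in> carrier_mat (d*4) (d*4)"
  unfolding kron_def by auto

lemma adjoint_carrier: "A \<in> carrier_mat n m \<Longrightarrow> Defs.adjoint A \<in> carrier_mat m n"
  unfolding Defs.adjoint_def by auto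

lemma adjoint_entry: "A \<in> carrier_mat n m \<Longrightarrow> i < m \<Longrightarrow> j < n \<Longrightarrow> Defs.adjoint A $$ (i,j) = cnj (A $$ (j,i))"
  unfolding Defs.adjoint_def by auto

lemma trace_reduce:
  fixes M R B :: "complex mat"
  assumes M: "M \<in> carrier_mat (d*4) (d*4)" and R: "R \<in> carrier_mat (d*4) (d*4)" and B: "B \<in> carrier_mat 4 4"
  shows "mtrace (M * (kron (1\<^sub>m d) B * R * Defs.adjoint (kron (1\<^sub>m d) B))) =
     Fm (d*4) M R (\<lambda>i j. B $$ (i,j)) (\<lambda>i j. B $$ (i,j))"
proof -
  let ?N = "d*4"
  let ?V = "kron (1\<^sub>m d) B"
  have V: "?V \<in> carrier_mat ?N ?N" by (rule kron_carrier[OF B])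
  have VR: "?V * R \<in> carrier_mat ?N ?N" using V R by simp
  have AV: "Defs.adjoint ?V \<in> carrier_mat ?N ?N" by (rule adjoint_carrier[OF V])
  have X: "?V * R * Defs.adjoint ?V \<in> carrier_mat ?N ?N" using VR AV by simp
  have xe: "(?V * R * Defs.adjoint ?V) $$ (j,i) =
     (\<Sum>b3<4. \<Sum>b4<4. B $$ (j mod 4, b3) * R $$ (4*(j div 4)+b3, 4*(i div 4)+b4) * cnj (B $$ (i mod 4, b4)))"
    if j: "j < ?N" and i: "i < ?N" for i j
  proof -
    have "(?V * R * Defs.adjoint ?V) $$ (j,i) = (\<Sum>l<?N. (?V * R) $$ (j,l) * Defs.adjoint ?V $$ (l,i))"
      by (rule mult_entry[OF VR AV j i])
    also have "\<dots> = (\<Sum>l<?N. (if l div 4 = i div 4 then (\<Sum>b3<4. B $$ (j mod 4, b3) * R $$ (4*(j div 4)+b3, l)) * cnj (B $$ (i mod 4, l mod 4)) else 0))"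
    proof (intro sum.cong refl)
      fix l assume l: "l \<in> {..<?N}"
      have "(?V * R) $$ (j,l) = (\<Sum>k<?N. ?V $$ (j,k) * R $$ (k,l))"
        using mult_entry[OF V R j] l by simp
      also have "\<dots> = (\<Sum>k<?N. (if k div 4 = j div 4 then B $$ (j mod 4, k mod 4) * R $$ (k,l) else 0))"
        by (intro sum.cong refl) (simp add: kron_id_entry[OF B j])
      also have "\<dots> = (\<Sum>b3<4. B $$ (j mod 4, b3) * R $$ (4*(j div 4)+b3, l))"
        by (subst blocksum[OF j]) simp
      finally have e1: "(?V * R) $$ (j,l) = (\<Sum>b3<4. B $$ (j mod 4, b3) * R $$ (4*(j div 4)+b3, l))" .
      have e2: "Defs.adjoint ?V $$ (l,i) = (if l div 4 = i div 4 then cnj (B $$ (i mod 4, l mod 4)) else 0)"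
        using l i by (simp add: adjoint_entry[OF V] kron_id_entry[OF B])
      show "(?V * R) $$ (j,l) * Defs.adjoint ?V $$ (l,i) = (if l div 4 = i div 4 then (\<Sum>b3<4. B $$ (j mod 4, b3) * R $$ (4*(j div 4)+b3, l)) * cnj (B $$ (i mod 4, l mod 4)) else 0)"
        unfolding e1 e2 by simp
    qed
    also have "\<dots> = (\<Sum>b4<4. (\<Sum>b3<4. B $$ (j mod 4, b3) * R $$ (4*(j div 4)+b3, 4*(i div 4)+b4)) * cnj (B $$ (i mod 4, b4)))"
      by (subst blocksum[OF i]) simp
    also have "\<dots> = (\<Sum>b3<4. \<Sum>b4<4. B $$ (j mod 4, b3) * R $$ (4*(j div 4)+b3, 4*(i div 4)+b4) * cnj (B $$ (i mod 4, b4)))"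
      unfolding sum_distrib_right by (rule sum.swap)
    finally show ?thesis .
  qed
  have "mtrace (M * (?V * R * Defs.adjoint ?V)) = (\<Sum>i<?N. (M * (?V * R * Defs.adjoint ?V)) $$ (i,i))"
    unfolding mtrace_def using M by simp
  also have "\<dots> = (\<Sum>i<?N. \<Sum>j<?N. M $$ (i,j) * (?V * R * Defs.adjoint ?V) $$ (j,i))"
    by (intro sum.cong refl mult_entry[OF M X]) auto
  also have "\<dots> = Fm ?N M R (\<lambda>i j. B $$ (i,j)) (\<lambda>i j. B $$ (i,j))"
    unfolding Fm_def
  proof (intro sum.cong refl)
    fix i j assume i: "i \<in> {..<?N}" and j: "j \<in> {..<?N}"
    show "M $$ (i,j) * (?V * R * Defs.adjoint ?V) $$ (j,i) = (\<Sum>b3<4. \<Sum>b4<4.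
      M $$ (i,j) * R $$ (4*(j div 4)+b3, 4*(i div 4)+b4) * B $$ (j mod 4, b3) * cnj (B $$ (i mod 4, b4)))"
      unfolding xe[OF j[simplified] i[simplified]] sum_distrib_left
      by (intro sum.cong refl) (simp only: mult.assoc mult.commute mult.left_commute)
  qed
  finally show ?thesis .
qed


lemma psd_psdf: assumes "psd n A" shows "psdf n (\<lambda>i j. A $$ (i,j))"
proof -
  have A: "A \<in> carrier_mat n n" and adj: "Defs.adjoint A = A" using assms unfolding psd_def by auto
  have "\<And>i j. i < n \<Longrightarrow> j < n \<Longrightarrow> A $$ (j,i) = cnj (A $$ (i,j))"
  proof -
    fix i j assume "i < n" "j < n"
    then have "Defs.adjoint A $$ (j,i) = cnj (A $$ (i,j))" using adjoint_entry[OF A] by simp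
    then show "A $$ (j,i) = cnj (A $$ (i,j))" using adj by simp
  qed
  then show ?thesis using assms unfolding psd_def psdf_def by blast
qed

lemma Fm_pos:
  assumes M: "psd (d*4) M" and R: "psd (d*4) R"
  shows "0 \<le> Re (Fm (d*4) M R U U)"
proof -
  let ?N = "d*4"
  obtain vs where vs: "\<forall>i<?N. \<forall>j<?N. R $$ (i,j) = (\<Sum>k<?N. vs k i * cnj (vs k j))"
    using psdf_decomp[OF psd_psdf[OF R]] by blast
  define x where "x = (\<lambda>k j. \<Sum>b3<4. U (j mod 4) b3 * vs k (4*(j div 4)+b3))"
  have bnd: "\<And>j b. j < ?N \<Longrightarrow> b < 4 \<Longrightarrow> 4*(j div 4)+b < ?N"
  proof -
    fix j b :: nat assume "j < ?N" "b < 4"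
    then have "j div 4 < d" by simp
    then show "4*(j div 4)+b < ?N" using \<open>b<4\<close> by linarith
  qed
  have inner: "(\<Sum>b3<4. \<Sum>b4<4. M $$ (i,j) * R $$ (4*(j div 4)+b3, 4*(i div 4)+b4) * U (j mod 4) b3 * cnj (U (i mod 4) b4))
      = (\<Sum>k<?N. cnj (x k i) * M $$ (i,j) * x k j)" if i: "i < ?N" and j: "j < ?N" for i j
  proof -
    have "(\<Sum>b3<4. \<Sum>b4<4. M $$ (i,j) * R $$ (4*(j div 4)+b3, 4*(i div 4)+b4) * U (j mod 4) b3 * cnj (U (i mod 4) b4))
      = (\<Sum>b3<4. \<Sum>b4<4. \<Sum>k<?N. M $$ (i,j) * (vs k (4*(j div 4)+b3) * cnj (vs k (4*(i div 4)+b4))) * U (j mod 4) b3 * cnj (U (i mod 4) b4))"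
      using vs bnd[OF i] bnd[OF j] by (simp add: sum_distrib_left sum_distrib_right)
    also have "\<dots> = (\<Sum>b3<4. \<Sum>k<?N. \<Sum>b4<4. M $$ (i,j) * (vs k (4*(j div 4)+b3) * cnj (vs k (4*(i div 4)+b4))) * U (j mod 4) b3 * cnj (U (i mod 4) b4))"
      by (rule sum.cong[OF refl], rule sum.swap)
    also have "\<dots> = (\<Sum>k<?N. \<Sum>b3<4. \<Sum>b4<4. M $$ (i,j) * (vs k (4*(j div 4)+b3) * cnj (vs k (4*(i div 4)+b4))) * U (j mod 4) b3 * cnj (U (i mod 4) b4))"
      by (rule sum.swap)
    also have "\<dots> = (\<Sum>k<?N. cnj (x k i) * M $$ (i,j) * x k j)"
    proof (intro sum.cong refl)
      fix k
      have "cnj (x k i) * M $$ (i,j) * x k j = (\<Sum>b3<4. \<Sum>b4<4. M $$ (i,j) * (vs k (4*(j div 4)+b3) * cnj (vs k (4*(i div 4)+b4))) * U (j mod 4) b3 * cnj (U (i mod 4) b4))"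
        unfolding x_def cnj_sum_c complex_cnj_mult sum_distrib_left sum_distrib_right
        by (intro sum.cong refl) (simp only: mult.assoc mult.commute mult.left_commute)
      then show "(\<Sum>b3<4. \<Sum>b4<4. M $$ (i,j) * (vs k (4*(j div 4)+b3) * cnj (vs k (4*(i div 4)+b4))) * U (j mod 4) b3 * cnj (U (i mod 4) b4)) = cnj (x k i) * M $$ (i,j) * x k j" by simp
    qed
    finally show ?thesis .
  qed
  have "Fm ?N M R U U = (\<Sum>i<?N. \<Sum>j<?N. \<Sum>k<?N. cnj (x k i) * M $$ (i,j) * x k j)"
    unfolding Fm_def by (rule sum.cong[OF refl], rule sum.cong[OF refl]) (simp add: inner)
  also have "\<dots> = (\<Sum>k<?N. qf ?N (\<lambda>i j. M $$ (i,j)) (x k))"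
    unfolding qf_def
  proof -
    have "(\<Sum>i<?N. \<Sum>j<?N. \<Sum>k<?N. cnj (x k i) * M $$ (i,j) * x k j) = (\<Sum>i<?N. \<Sum>k<?N. \<Sum>j<?N. cnj (x k i) * M $$ (i,j) * x k j)"
      by (rule sum.cong[OF refl], rule sum.swap)
    also have "\<dots> = (\<Sum>k<?N. \<Sum>i<?N. \<Sum>j<?N. cnj (x k i) * M $$ (i,j) * x k j)" by (rule sum.swap)
    finally show "(\<Sum>i<?N. \<Sum>j<?N. \<Sum>k<?N. cnj (x k i) * M $$ (i,j) * x k j) = (\<Sum>k<?N. \<Sum>i<?N. \<Sum>j<?N. cnj (x k i) * M $$ (i,j) * x k j)" .
  qed
  finally have "Re (Fm ?N M R U U) = (\<Sum>k<?N. Re (qf ?N (\<lambda>i j. M $$ (i,j)) (x k)))" by simp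
  also have "\<dots> \<ge> 0" by (intro sum_nonneg psdfD(2)[OF psd_psdf[OF M]])
  finally show ?thesis by simp
qed


lemma less4: "(i::nat) < 4 \<longleftrightarrow> i = 0 \<or> i = 1 \<or> i = 2 \<or> i = 3" by auto
lemma sum4: "(\<Sum>k<4::nat. f k) = f 0 + f 1 + f 2 + (f 3 :: 'a::comm_monoid_add)"
proof -
  show ?thesis by (simp add: eval_nat_numeral ac_simps)
qed

lemma mat_mult_mat': "mat n m f * mat m p g = mat n p (\<lambda>(i,j). \<Sum>k<m. f (i,k) * g (k,j))"
  by (rule eq_matI) (auto simp: scalar_prod_def lessThan_atLeast0 intro!: sum.cong)

lemma kron_mat: "kron (mat 2 2 f) (mat 2 2 g) = mat 4 4 (\<lambda>(i,j). f (i div 2, j div 2) * g (i mod 2, j mod 2))"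
  unfolding kron_def by (rule eq_matI) auto

lemma one4: "(1\<^sub>m 4 :: complex mat) = mat 4 4 (\<lambda>(i,j). if i = j then 1 else 0)"
  by (rule eq_matI) auto
lemma one2: "(1\<^sub>m 2 :: complex mat) = mat 2 2 (\<lambda>(i,j). if i = j then 1 else 0)"
  by (rule eq_matI) auto

definition sy :: "nat \<times> nat \<Rightarrow> complex" where "sy = (\<lambda>(i,j). [[0, -\<i>], [\<i>, 0]] ! i ! j)"
definition sz :: "nat \<times> nat \<Rightarrow> complex" where "sz = (\<lambda>(i,j). [[1, 0], [0, -1]] ! i ! j)"
definition cn :: "nat \<times> nat \<Rightarrow> complex" where "cn = (\<lambda>(i,j). [[1,0,0,0],[0,1,0,0],[0,0,0,1],[0,0,1,0]] ! i ! j)"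
definition i2 :: "nat \<times> nat \<Rightarrow> complex" where "i2 = (\<lambda>(i,j). if i = j then 1 else 0)"
definition i4 :: "nat \<times> nat \<Rightarrow> complex" where "i4 = (\<lambda>(i,j). if i = j then 1 else 0)"

lemma sigma_y_mat: "sigma_y = mat 2 2 sy" unfolding sigma_y_def sy_def mat_of_rows_list_def by (simp add: eval_nat_numeral)
lemma sigma_z_mat: "sigma_z = mat 2 2 sz" unfolding sigma_z_def sz_def mat_of_rows_list_def by (simp add: eval_nat_numeral)
lemma cnot_mat: "cnot = mat 4 4 cn" unfolding cnot_def cn_def mat_of_rows_list_def by (simp add: eval_nat_numeral)
lemma id2_mat: "id2 = mat 2 2 i2" unfolding id2_def i2_def by (rule eq_matI) auto
lemma one4_mat: "(1\<^sub>m 4 :: complex mat) = mat 4 4 i4" unfolding i4_def by (rule eq_matI) auto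

definition bf :: "bool \<Rightarrow> bool \<Rightarrow> bool \<Rightarrow> bool \<Rightarrow> nat \<times> nat \<Rightarrow> complex" where
  "bf y h1 h2 p = (\<lambda>(i,j). \<Sum>k<4. (\<Sum>l<4. (if p then (sz (i div 2, l div 2) * sz (i mod 2, l mod 2)) else i4 (i,l)) *
      ((if h1 then sy else i2) (l div 2, k div 2) * (if h2 then sy else i2) (l mod 2, k mod 2))) *
      (if \<not> y then cn else i4) (k,j))"

lemma bob_mat: "bob_unitary y h1 h2 p = mat 4 4 (bf y h1 h2 p)"
proof -
  have a: "(if p then kron sigma_z sigma_z else 1\<^sub>m 4) = mat 4 4 (\<lambda>(i,l). if p then (sz (i div 2, l div 2) * sz (i mod 2, l mod 2)) else i4 (i,l))"
    by (cases p) (simp_all add: sigma_z_mat kron_mat one4_mat)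
  have b: "kron (if h1 then sigma_y else id2) (if h2 then sigma_y else id2) = mat 4 4 (\<lambda>(l,k). (if h1 then sy else i2) (l div 2, k div 2) * (if h2 then sy else i2) (l mod 2, k mod 2))"
    by (cases h1; cases h2) (simp_all add: sigma_y_mat id2_mat kron_mat)
  have c: "(if \<not> y then cnot else 1\<^sub>m 4) = mat 4 4 (if \<not> y then cn else i4)"
    by (cases y) (simp_all add: cnot_mat one4_mat)
  show ?thesis unfolding bob_unitary_def a b c mat_mult_mat' bf_def by simp
qed

definition btab :: "bool \<Rightarrow> bool \<Rightarrow> bool \<Rightarrow> bool \<Rightarrow> complex list list" where
  "btab y h1 h2 p = (if y then (if h1 then (if h2 then (if p then [[0,0,0,-1],[0,0,-1,0],[0,-1,0,0],[-1,0,0,0]] else [[0,0,0,-1],[0,0,1,0],[0,1,0,0],[-1,0,0,0]]) else (if p then [[0,0,-\<i>,0],[0,0,0,\<i>],[-\<i>,0,0,0],[0,\<i>,0,0]] else [[0,0,-\<i>,0],[0,0,0,-\<i>],[\<i>,0,0,0],[0,\<i>,0,0]])) else (if h2 then (if p then [[0,-\<i>,0,0],[-\<i>,0,0,0],[0,0,0,\<i>],[0,0,\<i>,0]] else [[0,-\<i>,0,0],[\<i>,0,0,0],[0,0,0,-\<i>],[0,0,\<i>,0]]) else (if p then [[1,0,0,0],[0,-1,0,0],[0,0,-1,0],[0,0,0,1]] else [[1,0,0,0],[0,1,0,0],[0,0,1,0],[0,0,0,1]]))) else (if h1 then (if h2 then (if p then [[0,0,-1,0],[0,0,0,-1],[0,-1,0,0],[-1,0,0,0]]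 else [[0,0,-1,0],[0,0,0,1],[0,1,0,0],[-1,0,0,0]]) else (if p then [[0,0,0,-\<i>],[0,0,\<i>,0],[-\<i>,0,0,0],[0,\<i>,0,0]] else [[0,0,0,-\<i>],[0,0,-\<i>,0],[\<i>,0,0,0],[0,\<i>,0,0]])) else (if h2 then (if p then [[0,-\<i>,0,0],[-\<i>,0,0,0],[0,0,\<i>,0],[0,0,0,\<i>]] else [[0,-\<i>,0,0],[\<i>,0,0,0],[0,0,-\<i>,0],[0,0,0,\<i>]]) else (if p then [[1,0,0,0],[0,-1,0,0],[0,0,0,-1],[0,0,1,0]] else [[1,0,0,0],[0,1,0,0],[0,0,0,1],[0,0,1,0]]))))"

definition Dtab :: "complex list list list" where
  "Dtab = [[[1,-1,1,1],[0,0,0,0],[0,0,0,0],[1,-1,1,1]],[[1,-1,-1,-1],[0,0,0,0],[0,0,0,0],[-1,1,1,1]],[[0,0,0,0],[-1,1,1,1],[-1,1,1,1],[0,0,0,0]],[[0,0,0,0],[-1,1,-1,-1],[1,-1,1,1],[0,0,0,0]]]"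

definition Wtab :: "complex list list list" where
  "Wtab = [[[1,1,1,-1],[0,0,0,0],[0,0,0,0],[1,1,1,-1]],[[1,1,-1,1],[0,0,0,0],[0,0,0,0],[-1,-1,1,-1]],[[0,0,0,0],[1,1,-1,1],[1,1,-1,1],[0,0,0,0]],[[0,0,0,0],[1,1,1,-1],[-1,-1,-1,1],[0,0,0,0]]]"

definition Etab :: "complex list list list" where
  "Etab = [[[1,1,-1,1],[0,0,0,0],[0,0,0,0],[1,1,-1,1]],[[1,1,1,-1],[0,0,0,0],[0,0,0,0],[-1,-1,-1,1]],[[0,0,0,0],[1,1,1,-1],[1,1,1,-1],[0,0,0,0]],[[0,0,0,0],[1,1,-1,1],[-1,-1,1,-1],[0,0,0,0]]]"

lemma bf_tab: "i < 4 \<Longrightarrow> j < 4 \<Longrightarrow> bf y h1 h2 p (i,j) = btab y h1 h2 p ! i ! j"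
  unfolding less4
  by (cases y; cases h1; cases h2; cases p; elim disjE; simp add: bf_def btab_def sum4 sy_def sz_def cn_def i2_def i4_def)

definition Ut :: "bool \<Rightarrow> bool \<Rightarrow> bool \<Rightarrow> bool \<Rightarrow> nat \<Rightarrow> nat \<Rightarrow> complex" where
  "Ut y h1 h2 p i j = btab y h1 h2 p ! i ! j"
definition Dt :: "nat \<Rightarrow> nat \<Rightarrow> nat \<Rightarrow> complex" where "Dt c i j = Dtab ! c ! i ! j"
definition Wt :: "nat \<Rightarrow> nat \<Rightarrow> nat \<Rightarrow> complex" where "Wt c i j = Wtab ! c ! i ! j"
definition Et :: "nat \<Rightarrow> nat \<Rightarrow> nat \<Rightarrow> complex" where "Et c i j = Etab ! c ! i ! j"

lemma sumbool: "(\<Sum>b\<in>(UNIV::bool set). f b) = f True + f False"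
  by (simp add: UNIV_bool add.commute)

lemma tens1: "b1 < 4 \<Longrightarrow> b2 < 4 \<Longrightarrow> b3 < 4 \<Longrightarrow> b4 < 4 \<Longrightarrow>
  2 * (\<Sum>h1\<in>UNIV. \<Sum>h2\<in>UNIV. \<Sum>p\<in>UNIV. Ut False h1 h2 p b2 b3 * cnj (Ut False h1 h2 p b1 b4)) =
  (\<Sum>c<4. Wt c b2 b3 * cnj (Wt c b1 b4) + Dt c b2 b3 * cnj (Dt c b1 b4))"
  unfolding less4
  by (elim disjE; simp add: Ut_def btab_def Wt_def Wtab_def Dt_def Dtab_def sum4 sumbool)


definition Ub :: "bool \<Rightarrow> bool \<Rightarrow> bool \<Rightarrow> bool \<Rightarrow> nat \<Rightarrow> nat \<Rightarrow> complex" where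
  "Ub y h1 h2 p = (\<lambda>i j. bob_unitary y h1 h2 p $$ (i,j))"

lemma bob_carrier: "bob_unitary y h1 h2 p \<in> carrier_mat 4 4"
  unfolding bob_mat by simp

lemma Ub_tab: "i < 4 \<Longrightarrow> j < 4 \<Longrightarrow> Ub y h1 h2 p i j = Ut y h1 h2 p i j"
  unfolding Ub_def Ut_def bob_mat by (simp add: bf_tab)

lemma tens2: "b1 < 4 \<Longrightarrow> b2 < 4 \<Longrightarrow> b3 < 4 \<Longrightarrow> b4 < 4 \<Longrightarrow>
  2 * (\<Sum>h1\<in>UNIV. \<Sum>h2\<in>UNIV. \<Sum>p\<in>UNIV. Ut True h1 h2 p b2 b3 * cnj (Ut True h1 h2 p b1 b4)) =
  (\<Sum>c<4. Dt c b2 b3 * cnj (Dt c b1 b4) + Et c b2 b3 * cnj (Et c b1 b4))"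
  unfolding less4
  by (elim disjE; simp add: Ut_def btab_def Et_def Etab_def Dt_def Dtab_def sum4 sumbool)

lemma tens3: "b1 < 4 \<Longrightarrow> b2 < 4 \<Longrightarrow> b3 < 4 \<Longrightarrow> b4 < 4 \<Longrightarrow>
  2 * (\<Sum>h1\<in>UNIV. \<Sum>h2\<in>UNIV. \<Sum>p\<in>UNIV. (if h1 = h2 then 1 else -1) * (Ut False h1 h2 p b2 b3 * cnj (Ut False h1 h2 p b1 b4))) =
  (\<Sum>c<4. Dt c b2 b3 * cnj (Wt c b1 b4) + Wt c b2 b3 * cnj (Dt c b1 b4))"
  unfolding less4
  by (elim disjE; simp add: Ut_def btab_def Wt_def Wtab_def Dt_def Dtab_def sum4 sumbool)

lemma tens4: "b1 < 4 \<Longrightarrow> b2 < 4 \<Longrightarrow> b3 < 4 \<Longrightarrow> b4 < 4 \<Longrightarrow>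
  2 * (\<Sum>h1\<in>UNIV. \<Sum>h2\<in>UNIV. \<Sum>p\<in>UNIV. (if h1 = h2 then 1 else -1) * (Ut True h1 h2 p b2 b3 * cnj (Ut True h1 h2 p b1 b4))) =
  (\<Sum>c<4. Dt c b2 b3 * cnj (Et c b1 b4) + Et c b2 b3 * cnj (Dt c b1 b4))"
  unfolding less4
  by (elim disjE; simp add: Ut_def btab_def Et_def Etab_def Dt_def Dtab_def sum4 sumbool)

lemma Phi_sum3: "Phi N M R (\<lambda>b1 b2 b3 b4. \<Sum>h1\<in>(UNIV::bool set). \<Sum>h2\<in>(UNIV::bool set). \<Sum>p\<in>(UNIV::bool set). T h1 h2 p b1 b2 b3 b4)
   = (\<Sum>h1\<in>UNIV. \<Sum>h2\<in>UNIV. \<Sum>p\<in>UNIV. Phi N M R (T h1 h2 p))"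
  by (simp add: Phi_sum)

lemma Phi_sumc: "Phi N M R (\<lambda>b1 b2 b3 b4. \<Sum>c<(4::nat). T c b1 b2 b3 b4 + T' c b1 b2 b3 b4)
   = (\<Sum>c<4. Phi N M R (T c) + Phi N M R (T' c))"
  by (simp add: Phi_sum sum.distrib Phi_add)

lemma iden_gen:
  assumes t: "\<And>b1 b2 b3 b4. b1 < 4 \<Longrightarrow> b2 < 4 \<Longrightarrow> b3 < 4 \<Longrightarrow> b4 < 4 \<Longrightarrow>
     2 * (\<Sum>h1\<in>UNIV. \<Sum>h2\<in>UNIV. \<Sum>p\<in>UNIV. s h1 h2 p * (Ut y h1 h2 p b2 b3 * cnj (Ut y h1 h2 p b1 b4))) =
     (\<Sum>c<(4::nat). X c b2 b3 * cnj (Y c b1 b4) + X' c b2 b3 * cnj (Y' c b1 b4))"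
  shows "2 * (\<Sum>h1\<in>UNIV. \<Sum>h2\<in>UNIV. \<Sum>p\<in>UNIV. s h1 h2 p * Fm N M R (Ub y h1 h2 p) (Ub y h1 h2 p)) =
     (\<Sum>c<(4::nat). Fm N M R (X c) (Y c) + Fm N M R (X' c) (Y' c))"
proof -
  have "2 * (\<Sum>h1\<in>UNIV. \<Sum>h2\<in>UNIV. \<Sum>p\<in>UNIV. s h1 h2 p * Fm N M R (Ub y h1 h2 p) (Ub y h1 h2 p))
     = Phi N M R (\<lambda>b1 b2 b3 b4. 2 * (\<Sum>h1\<in>UNIV. \<Sum>h2\<in>UNIV. \<Sum>p\<in>UNIV. s h1 h2 p * (Ub y h1 h2 p b2 b3 * cnj (Ub y h1 h2 p b1 b4))))"
    unfolding Phi_scale Phi_sum3 Fm_Phi by (simp add: Phi_scale)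
  also have "\<dots> = Phi N M R (\<lambda>b1 b2 b3 b4. \<Sum>c<4. X c b2 b3 * cnj (Y c b1 b4) + X' c b2 b3 * cnj (Y' c b1 b4))"
    by (rule Phi_cong) (simp add: Ub_tab t)
  also have "\<dots> = (\<Sum>c<4. Fm N M R (X c) (Y c) + Fm N M R (X' c) (Y' c))"
    unfolding Fm_Phi using Phi_sumc[of N M R "\<lambda>c b1 b2 b3 b4. X c b2 b3 * cnj (Y c b1 b4)" "\<lambda>c b1 b2 b3 b4. X' c b2 b3 * cnj (Y' c b1 b4)"] by simp
  finally show ?thesis .
qed


lemma comb_ineq:
  fixes a b c x1 x2 :: real
  assumes a: "0 \<le> a" and b: "0 \<le> b" and c: "0 \<le> c" and h1: "x1^2 \<le> 4*a*b" and h2: "x2^2 \<le> 4*a*c"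
  shows "(x1 + x2)^2 \<le> 4*(a+b)*(a+c)"
proof -
  define u where "u = sqrt a"
  define s where "s = sqrt b"
  define t where "t = sqrt c"
  have u0: "0 \<le> u" and s0: "0 \<le> s" and t0: "0 \<le> t" using a b c by (simp_all add: u_def s_def t_def)
  have au: "a = u^2" and bs: "b = s^2" and ct: "c = t^2" using a b c by (simp_all add: u_def s_def t_def)
  have "x1^2 \<le> (2*u*s)^2" using h1 unfolding au bs by (simp add: power_mult_distrib)
  then have e1: "\<bar>x1\<bar> \<le> 2*u*s" using u0 s0 by (metis abs_le_square_iff abs_of_nonneg mult_nonneg_nonneg zero_le_numeral)
  have "x2^2 \<le> (2*u*t)^2" using h2 unfolding au ct by (simp add: power_mult_distrib)
  then have e2: "\<bar>x2\<bar> \<le> 2*u*t" using u0 t0 by (metis abs_le_square_iff abs_of_nonneg mult_nonneg_nonneg zero_le_numeral)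
  have "\<bar>x1 + x2\<bar> \<le> 2*u*(s+t)" using e1 e2 abs_triangle_ineq[of x1 x2] by (simp add: algebra_simps)
  then have "(x1+x2)^2 \<le> (2*u*(s+t))^2"
    by (metis abs_le_square_iff abs_of_nonneg add_nonneg_nonneg mult_nonneg_nonneg s0 t0 u0 zero_le_numeral)
  also have "\<dots> \<le> 4*(a+b)*(a+c)"
  proof -
    have "4*(a+b)*(a+c) - (2*u*(s+t))^2 = 4*(u^2 - s*t)^2" unfolding au bs ct by (simp add: algebra_simps power2_eq_square)
    then show ?thesis by (smt (verit) zero_le_power2)
  qed
  finally show ?thesis .
qed


lemma Re_sign: "Re ((if b then 1 else -1) * z) = (if b then 1 else -1) * Re z"
  by (cases b) auto
lemma Re_if1: "Re (if b then 1 else -1) = (if b then 1 else (-1::real))" by simp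
lemma Im_if1: "Im (if b then 1 else -1) = 0" by simp

lemma fin_alg:
  fixes a0 a1 b0 b1 :: real
  assumes "(2*b0 + 2*b1)^2 \<le> 4*(2*a0)*(2*a1)"
  shows "(a0 - a1)^2 + (b0 + b1)^2 \<le> (a0 + a1)^2"
proof -
  have e1: "(a0+a1)^2 - (a0-a1)^2 = 4*a0*a1" by (simp add: power2_eq_square algebra_simps)
  have e2: "(2*b0+2*b1)^2 = 4*(b0+b1)^2" by (simp add: power2_eq_square algebra_simps)
  show ?thesis using assms e1 e2 by linarith
qed

lemma per_out:
  fixes N :: nat and M R :: "complex mat"
  assumes pos: "\<And>U. 0 \<le> Re (Fm N M R U U)"
  defines "q \<equiv> \<lambda>y h1 h2 p. Re (Fm N M R (Ub y h1 h2 p) (Ub y h1 h2 p))"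
  defines "A \<equiv> \<lambda>y. (\<Sum>h1\<in>UNIV. \<Sum>h2\<in>UNIV. \<Sum>p\<in>UNIV. q y h1 h2 p)"
  defines "B \<equiv> \<lambda>y. (\<Sum>h1\<in>UNIV. \<Sum>h2\<in>UNIV. \<Sum>p\<in>UNIV. (if h1 = h2 then 1 else -1) * q y h1 h2 p)"
  shows "(A False - A True)^2 + (B False + B True)^2 \<le> (A False + A True)^2"
    and "(A False - A True)^2 + (B False - B True)^2 \<le> (A False + A True)^2"
proof -
  define SD where "SD = (\<Sum>c<(4::nat). Re (Fm N M R (Dt c) (Dt c)))"
  define SW where "SW = (\<Sum>c<(4::nat). Re (Fm N M R (Wt c) (Wt c)))"
  define SE where "SE = (\<Sum>c<(4::nat). Re (Fm N M R (Et c) (Et c)))"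
  define XW where "XW = (\<Sum>c<(4::nat). Re (Fm N M R (Dt c) (Wt c) + Fm N M R (Wt c) (Dt c)))"
  define XE where "XE = (\<Sum>c<(4::nat). Re (Fm N M R (Dt c) (Et c) + Fm N M R (Et c) (Dt c)))"
  have i1: "2 * (\<Sum>h1\<in>UNIV. \<Sum>h2\<in>UNIV. \<Sum>p\<in>UNIV. 1 * Fm N M R (Ub False h1 h2 p) (Ub False h1 h2 p)) =
     (\<Sum>c<(4::nat). Fm N M R (Wt c) (Wt c) + Fm N M R (Dt c) (Dt c))"
    by (rule iden_gen) (simp add: tens1)
  have i2: "2 * (\<Sum>h1\<in>UNIV. \<Sum>h2\<in>UNIV. \<Sum>p\<in>UNIV. 1 * Fm N M R (Ub True h1 h2 p) (Ub True h1 h2 p)) =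
     (\<Sum>c<(4::nat). Fm N M R (Dt c) (Dt c) + Fm N M R (Et c) (Et c))"
    by (rule iden_gen) (simp add: tens2)
  have i3: "2 * (\<Sum>h1\<in>UNIV. \<Sum>h2\<in>UNIV. \<Sum>p\<in>UNIV. (if h1 = h2 then 1 else -1) * Fm N M R (Ub False h1 h2 p) (Ub False h1 h2 p)) =
     (\<Sum>c<(4::nat). Fm N M R (Dt c) (Wt c) + Fm N M R (Wt c) (Dt c))"
    by (rule iden_gen) (simp add: tens3)
  have i4: "2 * (\<Sum>h1\<in>UNIV. \<Sum>h2\<in>UNIV. \<Sum>p\<in>UNIV. (if h1 = h2 then 1 else -1) * Fm N M R (Ub True h1 h2 p) (Ub True h1 h2 p)) =
     (\<Sum>c<(4::nat). Fm N M R (Dt c) (Et c) + Fm N M R (Et c) (Dt c))"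
    by (rule iden_gen) (simp add: tens4)
  have r1: "2 * A False = SW + SD"
    using arg_cong[OF i1, of Re] unfolding A_def q_def SW_def SD_def by (simp add: sum.distrib)
  have r2: "2 * A True = SD + SE"
    using arg_cong[OF i2, of Re] unfolding A_def q_def SE_def SD_def by (simp add: sum.distrib)
  have r3: "2 * B False = XW"
    using arg_cong[OF i3, of Re] unfolding B_def q_def XW_def by (simp add: Re_sign Re_if1 Im_if1)
  have r4: "2 * B True = XE"
    using arg_cong[OF i4, of Re] unfolding B_def q_def XE_def by (simp add: Re_sign Re_if1 Im_if1)
  have cs1: "XW^2 \<le> 4 * SD * SW" unfolding XW_def SD_def SW_def by (rule CS4[OF pos])
  have cs2: "XE^2 \<le> 4 * SD * SE" unfolding XE_def SD_def SE_def by (rule CS4[OF pos])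
  have n: "0 \<le> SD" "0 \<le> SW" "0 \<le> SE" unfolding SD_def SW_def SE_def by (intro sum_nonneg pos)+
  have c1: "(XW + XE)^2 \<le> 4*(SD+SW)*(SD+SE)" by (rule comb_ineq[OF n cs1 cs2])
  have c2: "(XW + (-XE))^2 \<le> 4*(SD+SW)*(SD+SE)" by (rule comb_ineq[OF n cs1]) (use cs2 in simp)
  have e1: "SD + SW = 2 * A False" "SD + SE = 2 * A True" "XW = 2 * B False" "XE = 2 * B True"
    using r1 r2 r3 r4 by simp_all
  show "(A False - A True)^2 + (B False + B True)^2 \<le> (A False + A True)^2"
    by (rule fin_alg) (use c1 in \<open>simp only: e1\<close>)
  show "(A False - A True)^2 + (B False - B True)^2 \<le> (A False + A True)^2"
  proof -
    have "(2 * B False + 2 * (- B True))^2 \<le> 4 * (2 * A False) * (2 * A True)"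
      using c2 unfolding e1 by simp
    then have "(A False - A True)^2 + (B False + (- B True))^2 \<le> (A False + A True)^2" by (rule fin_alg)
    then show ?thesis by simp
  qed
qed


lemma info_bound:
  fixes P :: "bool \<Rightarrow> nat \<Rightarrow> real" and Os :: "nat set"
  assumes fin: "finite Os" and nn: "\<And>x o'. o' \<in> Os \<Longrightarrow> 0 \<le> P x o'" and marg: "\<And>x. (\<Sum>o'\<in>Os. P x o') = 1/2"
  shows "mutual_info (UNIV :: bool set) Os P \<le>
    (\<Sum>o'\<in>Os. (if P True o' + P False o' = 0 then 0 else (P True o' - P False o')^2 / (P True o' + P False o')))"
proof -
  define tm where "tm = (\<lambda>a po::real. if a = 0 then 0 else a * log 2 (a / ((1/2) * po)))"
  have "mutual_info (UNIV :: bool set) Os P = (\<Sum>x\<in>UNIV. \<Sum>o'\<in>Os. tm (P x o') (P True o' + P False o'))"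
  proof -
    have po: "\<And>o'. (\<Sum>x'\<in>(UNIV::bool set). P x' o') = P True o' + P False o'" by (rule sumbool)
    show ?thesis unfolding mutual_info_def tm_def Let_def marg po ..
  qed
  also have "\<dots> = (\<Sum>o'\<in>Os. tm (P True o') (P True o' + P False o') + tm (P False o') (P True o' + P False o'))"
    by (simp add: sumbool sum.distrib)
  also have "\<dots> \<le> (\<Sum>o'\<in>Os. (if P True o' + P False o' = 0 then 0 else (P True o' - P False o')^2 / (P True o' + P False o')))"
  proof (rule sum_mono)
    fix o' assume oo: "o' \<in> Os"
    show "tm (P True o') (P True o' + P False o') + tm (P False o') (P True o' + P False o') \<le>
      (if P True o' + P False o' = 0 then 0 else (P True o' - P False o')^2 / (P True o' + P False o'))"
    proof (cases "P True o' + P False o' = 0")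
      case True
      then have "P True o' = 0" "P False o' = 0" using nn[OF oo, of True] nn[OF oo, of False] by linarith+
      then show ?thesis by (simp add: tm_def)
    next
      case False
      then have pos: "0 < P True o' + P False o'" using nn[OF oo, of True] nn[OF oo, of False] by linarith
      show ?thesis using info_term[OF nn[OF oo] nn[OF oo] pos] False unfolding tm_def by simp
    qed
  qed
  finally show ?thesis .
qed


lemma unit_Ut_0: "b3 < 4 \<Longrightarrow> b4 < 4 \<Longrightarrow>
  (\<Sum>\<beta><4. Ut False False False False \<beta> b3 * cnj (Ut False False False False \<beta> b4)) = (if b3 = b4 then 1 else 0)"
  unfolding less4 by (elim disjE; simp add: Ut_def btab_def sum4)

lemma unit_Ut_1: "b3 < 4 \<Longrightarrow> b4 < 4 \<Longrightarrow>
  (\<Sum>\<beta><4. Ut False False False True \<beta> b3 * cnj (Ut False False False True \<beta> b4)) = (if b3 = b4 then 1 else 0)"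
  unfolding less4 by (elim disjE; simp add: Ut_def btab_def sum4)

lemma unit_Ut_2: "b3 < 4 \<Longrightarrow> b4 < 4 \<Longrightarrow>
  (\<Sum>\<beta><4. Ut False False True False \<beta> b3 * cnj (Ut False False True False \<beta> b4)) = (if b3 = b4 then 1 else 0)"
  unfolding less4 by (elim disjE; simp add: Ut_def btab_def sum4)

lemma unit_Ut_3: "b3 < 4 \<Longrightarrow> b4 < 4 \<Longrightarrow>
  (\<Sum>\<beta><4. Ut False False True True \<beta> b3 * cnj (Ut False False True True \<beta> b4)) = (if b3 = b4 then 1 else 0)"
  unfolding less4 by (elim disjE; simp add: Ut_def btab_def sum4)

lemma unit_Ut_4: "b3 < 4 \<Longrightarrow> b4 < 4 \<Longrightarrow>
  (\<Sum>\<beta><4. Ut False True False False \<beta> b3 * cnj (Ut False True False False \<beta> b4)) = (if b3 = b4 then 1 else 0)"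
  unfolding less4 by (elim disjE; simp add: Ut_def btab_def sum4)

lemma unit_Ut_5: "b3 < 4 \<Longrightarrow> b4 < 4 \<Longrightarrow>
  (\<Sum>\<beta><4. Ut False True False True \<beta> b3 * cnj (Ut False True False True \<beta> b4)) = (if b3 = b4 then 1 else 0)"
  unfolding less4 by (elim disjE; simp add: Ut_def btab_def sum4)

lemma unit_Ut_6: "b3 < 4 \<Longrightarrow> b4 < 4 \<Longrightarrow>
  (\<Sum>\<beta><4. Ut False True True False \<beta> b3 * cnj (Ut False True True False \<beta> b4)) = (if b3 = b4 then 1 else 0)"
  unfolding less4 by (elim disjE; simp add: Ut_def btab_def sum4)

lemma unit_Ut_7: "b3 < 4 \<Longrightarrow> b4 < 4 \<Longrightarrow>
  (\<Sum>\<beta><4. Ut False True True True \<beta> b3 * cnj (Ut False True True True \<beta> b4)) = (if b3 = b4 then 1 else 0)"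
  unfolding less4 by (elim disjE; simp add: Ut_def btab_def sum4)

lemma unit_Ut_8: "b3 < 4 \<Longrightarrow> b4 < 4 \<Longrightarrow>
  (\<Sum>\<beta><4. Ut True False False False \<beta> b3 * cnj (Ut True False False False \<beta> b4)) = (if b3 = b4 then 1 else 0)"
  unfolding less4 by (elim disjE; simp add: Ut_def btab_def sum4)

lemma unit_Ut_9: "b3 < 4 \<Longrightarrow> b4 < 4 \<Longrightarrow>
  (\<Sum>\<beta><4. Ut True False False True \<beta> b3 * cnj (Ut True False False True \<beta> b4)) = (if b3 = b4 then 1 else 0)"
  unfolding less4 by (elim disjE; simp add: Ut_def btab_def sum4)

lemma unit_Ut_10: "b3 < 4 \<Longrightarrow> b4 < 4 \<Longrightarrow>
  (\<Sum>\<beta><4. Ut True False True False \<beta> b3 * cnj (Ut True False True False \<beta> b4)) = (if b3 = b4 then 1 else 0)"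
  unfolding less4 by (elim disjE; simp add: Ut_def btab_def sum4)

lemma unit_Ut_11: "b3 < 4 \<Longrightarrow> b4 < 4 \<Longrightarrow>
  (\<Sum>\<beta><4. Ut True False True True \<beta> b3 * cnj (Ut True False True True \<beta> b4)) = (if b3 = b4 then 1 else 0)"
  unfolding less4 by (elim disjE; simp add: Ut_def btab_def sum4)

lemma unit_Ut_12: "b3 < 4 \<Longrightarrow> b4 < 4 \<Longrightarrow>
  (\<Sum>\<beta><4. Ut True True False False \<beta> b3 * cnj (Ut True True False False \<beta> b4)) = (if b3 = b4 then 1 else 0)"
  unfolding less4 by (elim disjE; simp add: Ut_def btab_def sum4)

lemma unit_Ut_13: "b3 < 4 \<Longrightarrow> b4 < 4 \<Longrightarrow>
  (\<Sum>\<beta><4. Ut True True False True \<beta> b3 * cnj (Ut True True False True \<beta> b4)) = (if b3 = b4 then 1 else 0)"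
  unfolding less4 by (elim disjE; simp add: Ut_def btab_def sum4)

lemma unit_Ut_14: "b3 < 4 \<Longrightarrow> b4 < 4 \<Longrightarrow>
  (\<Sum>\<beta><4. Ut True True True False \<beta> b3 * cnj (Ut True True True False \<beta> b4)) = (if b3 = b4 then 1 else 0)"
  unfolding less4 by (elim disjE; simp add: Ut_def btab_def sum4)

lemma unit_Ut_15: "b3 < 4 \<Longrightarrow> b4 < 4 \<Longrightarrow>
  (\<Sum>\<beta><4. Ut True True True True \<beta> b3 * cnj (Ut True True True True \<beta> b4)) = (if b3 = b4 then 1 else 0)"
  unfolding less4 by (elim disjE; simp add: Ut_def btab_def sum4)

lemma unit_Ut: "b3 < 4 \<Longrightarrow> b4 < 4 \<Longrightarrow>
  (\<Sum>\<beta><4. Ut y h1 h2 p \<beta> b3 * cnj (Ut y h1 h2 p \<beta> b4)) = (if b3 = b4 then 1 else 0)"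
  by (cases y; cases h1; cases h2; cases p) (simp_all only: unit_Ut_0 unit_Ut_1 unit_Ut_2 unit_Ut_3 unit_Ut_4 unit_Ut_5 unit_Ut_6 unit_Ut_7 unit_Ut_8 unit_Ut_9 unit_Ut_10 unit_Ut_11 unit_Ut_12 unit_Ut_13 unit_Ut_14 unit_Ut_15)

lemma unit_Ub: "b3 < 4 \<Longrightarrow> b4 < 4 \<Longrightarrow>
  (\<Sum>\<beta><4. Ub y h1 h2 p \<beta> b3 * cnj (Ub y h1 h2 p \<beta> b4)) = (if b3 = b4 then 1 else 0)"
proof -
  assume a: "b3 < 4" "b4 < 4"
  have "(\<Sum>\<beta><4. Ub y h1 h2 p \<beta> b3 * cnj (Ub y h1 h2 p \<beta> b4)) = (\<Sum>\<beta><4. Ut y h1 h2 p \<beta> b3 * cnj (Ut y h1 h2 p \<beta> b4))"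
    using a by (intro sum.cong refl) (simp add: Ub_tab)
  also have "\<dots> = (if b3 = b4 then 1 else 0)" by (rule unit_Ut[OF a])
  finally show ?thesis .
qed

lemma group4: fixes g :: "nat \<Rightarrow> nat \<Rightarrow> 'a::comm_monoid_add"
  shows "(\<Sum>i<d*4. g (i div 4) (i mod 4)) = (\<Sum>a<d. \<Sum>\<beta><4. g a \<beta>)"
proof -
  have "(\<Sum>i<d*4. g (i div 4) (i mod 4)) = (\<Sum>a<d. \<Sum>i\<in>{a*4..<a*4+4}. g (i div 4) (i mod 4))"
    by (rule sum.nat_group[symmetric])
  also have "\<dots> = (\<Sum>a<d. \<Sum>\<beta><4. g a \<beta>)"
  proof (rule sum.cong[OF refl])
    fix a
    have "(\<Sum>i\<in>{a*4..<a*4+4}. g (i div 4) (i mod 4)) = (\<Sum>i\<in>{0+a*4..<4+a*4}. g (i div 4) (i mod 4))"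
      by (simp add: add.commute)
    also have "\<dots> = (\<Sum>i\<in>{0..<4}. g ((i + a*4) div 4) ((i + a*4) mod 4))"
      by (rule sum.shift_bounds_nat_ivl)
    also have "\<dots> = (\<Sum>\<beta><4. g a \<beta>)"
      by (simp add: atLeast0LessThan)
    finally show "(\<Sum>i\<in>{a*4..<a*4+4}. g (i div 4) (i mod 4)) = (\<Sum>\<beta><4. g a \<beta>)" .
  qed
  finally show ?thesis .
qed

lemma swap5: "(\<Sum>o'\<in>S. \<Sum>i\<in>I. \<Sum>j\<in>J. \<Sum>a\<in>K. \<Sum>b\<in>K2. f o' i j a b) = (\<Sum>i\<in>I. \<Sum>j\<in>J. \<Sum>a\<in>K. \<Sum>b\<in>K2. \<Sum>o'\<in>S. f o' i j a b)"
proof -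
  have "(\<Sum>o'\<in>S. \<Sum>i\<in>I. \<Sum>j\<in>J. \<Sum>a\<in>K. \<Sum>b\<in>K2. f o' i j a b) = (\<Sum>i\<in>I. \<Sum>o'\<in>S. \<Sum>j\<in>J. \<Sum>a\<in>K. \<Sum>b\<in>K2. f o' i j a b)"
    by (rule sum.swap)
  also have "\<dots> = (\<Sum>i\<in>I. \<Sum>j\<in>J. \<Sum>o'\<in>S. \<Sum>a\<in>K. \<Sum>b\<in>K2. f o' i j a b)"
    by (rule sum.cong[OF refl], rule sum.swap)
  also have "\<dots> = (\<Sum>i\<in>I. \<Sum>j\<in>J. \<Sum>a\<in>K. \<Sum>o'\<in>S. \<Sum>b\<in>K2. f o' i j a b)"
    by (rule sum.cong[OF refl], rule sum.cong[OF refl], rule sum.swap)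
  also have "\<dots> = (\<Sum>i\<in>I. \<Sum>j\<in>J. \<Sum>a\<in>K. \<Sum>b\<in>K2. \<Sum>o'\<in>S. f o' i j a b)"
    by (rule sum.cong[OF refl], rule sum.cong[OF refl], rule sum.cong[OF refl], rule sum.swap)
  finally show ?thesis .
qed

lemma Fm_marg:
  assumes P: "povm (d*4) Ms" and R: "density (d*4) R"
  shows "(\<Sum>o'<length Ms. Fm (d*4) (Ms ! o') R (Ub y h1 h2 p) (Ub y h1 h2 p)) = 1"
proof -
  let ?N = "d*4"
  let ?U = "Ub y h1 h2 p"
  have Msum: "\<And>i j. i < ?N \<Longrightarrow> j < ?N \<Longrightarrow> (\<Sum>o'<length Ms. Ms ! o' $$ (i,j)) = (if i = j then 1 else 0)"
    using P unfolding povm_def by blast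
  have Rc: "R \<in> carrier_mat ?N ?N" and tr: "mtrace R = 1" using R unfolding density_def psd_def by auto
  define g where "g = (\<lambda>i j. \<Sum>b3<4. \<Sum>b4<4. R $$ (4*(j div 4)+b3, 4*(i div 4)+b4) * ?U (j mod 4) b3 * cnj (?U (i mod 4) b4))"
  have "(\<Sum>o'<length Ms. Fm ?N (Ms ! o') R ?U ?U) =
     (\<Sum>i<?N. \<Sum>j<?N. \<Sum>b3<4. \<Sum>b4<4. \<Sum>o'<length Ms. Ms ! o' $$ (i,j) * R $$ (4*(j div 4)+b3, 4*(i div 4)+b4) * ?U (j mod 4) b3 * cnj (?U (i mod 4) b4))"
    unfolding Fm_def by (rule swap5)
  also have "\<dots> = (\<Sum>i<?N. \<Sum>j<?N. (\<Sum>o'<length Ms. Ms ! o' $$ (i,j)) * g i j)"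
    unfolding g_def by (simp add: sum_distrib_left sum_distrib_right mult.assoc)
  also have "\<dots> = (\<Sum>i<?N. g i i)"
  proof (rule sum.cong[OF refl])
    fix i assume i: "i \<in> {..<?N}"
    have "(\<Sum>j<?N. (\<Sum>o'<length Ms. Ms ! o' $$ (i,j)) * g i j) = (\<Sum>j<?N. (if i = j then g i j else 0))"
      using i by (intro sum.cong refl) (simp add: Msum)
    also have "\<dots> = g i i" using i by simp
    finally show "(\<Sum>j<?N. (\<Sum>o'<length Ms. Ms ! o' $$ (i,j)) * g i j) = g i i" .
  qed
  also have "\<dots> = (\<Sum>a<d. \<Sum>\<beta><4. \<Sum>b3<4. \<Sum>b4<4. R $$ (4*a+b3, 4*a+b4) * ?U \<beta> b3 * cnj (?U \<beta> b4))"
    using group4[of "\<lambda>a \<beta>. \<Sum>b3<4. \<Sum>b4<4. R $$ (4*a+b3, 4*a+b4) * ?U \<beta> b3 * cnj (?U \<beta> b4)" d]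
    unfolding g_def by simp
  also have "\<dots> = (\<Sum>a<d. \<Sum>b3<4. \<Sum>b4<4. R $$ (4*a+b3, 4*a+b4) * (\<Sum>\<beta><4. ?U \<beta> b3 * cnj (?U \<beta> b4)))"
  proof (rule sum.cong[OF refl])
    fix a
    have "(\<Sum>\<beta><4::nat. \<Sum>b3<4::nat. \<Sum>b4<4::nat. R $$ (4*a+b3, 4*a+b4) * ?U \<beta> b3 * cnj (?U \<beta> b4))
       = (\<Sum>b3<4. \<Sum>\<beta><4. \<Sum>b4<4. R $$ (4*a+b3, 4*a+b4) * ?U \<beta> b3 * cnj (?U \<beta> b4))" by (rule sum.swap)
    also have "\<dots> = (\<Sum>b3<4. \<Sum>b4<4. \<Sum>\<beta><4. R $$ (4*a+b3, 4*a+b4) * ?U \<beta> b3 * cnj (?U \<beta> b4))"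
      by (rule sum.cong[OF refl], rule sum.swap)
    also have "\<dots> = (\<Sum>b3<4. \<Sum>b4<4. R $$ (4*a+b3, 4*a+b4) * (\<Sum>\<beta><4. ?U \<beta> b3 * cnj (?U \<beta> b4)))"
      by (simp add: sum_distrib_left mult.assoc)
    finally show "(\<Sum>\<beta><4::nat. \<Sum>b3<4::nat. \<Sum>b4<4::nat. R $$ (4*a+b3, 4*a+b4) * ?U \<beta> b3 * cnj (?U \<beta> b4))
       = (\<Sum>b3<4. \<Sum>b4<4. R $$ (4*a+b3, 4*a+b4) * (\<Sum>\<beta><4. ?U \<beta> b3 * cnj (?U \<beta> b4)))" .
  qed
  also have "\<dots> = (\<Sum>a<d. \<Sum>b3<4. R $$ (4*a+b3, 4*a+b3))"
  proof (rule sum.cong[OF refl], rule sum.cong[OF refl])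
    fix a b3 :: nat assume "b3 \<in> {..<4}"
    then have "(\<Sum>b4<4. R $$ (4*a+b3, 4*a+b4) * (\<Sum>\<beta><4. ?U \<beta> b3 * cnj (?U \<beta> b4))) = (\<Sum>b4<4. (if b3 = b4 then R $$ (4*a+b3, 4*a+b4) else 0))"
      by (intro sum.cong refl) (simp add: unit_Ub)
    also have "\<dots> = R $$ (4*a+b3, 4*a+b3)" using \<open>b3 \<in> {..<4}\<close> by simp
    finally show "(\<Sum>b4<4. R $$ (4*a+b3, 4*a+b4) * (\<Sum>\<beta><4. ?U \<beta> b3 * cnj (?U \<beta> b4))) = R $$ (4*a+b3, 4*a+b3)" .
  qed
  also have "\<dots> = (\<Sum>i<?N. R $$ (i,i))"
    using group4[of "\<lambda>a \<beta>. R $$ (4*a+\<beta>, 4*a+\<beta>)" d] by simp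
  also have "\<dots> = 1" using tr Rc unfolding mtrace_def by simp
  finally show ?thesis .
qed


lemma sum_omega: "(\<Sum>\<omega>\<in>(UNIV::(bool\<times>bool\<times>bool\<times>bool) set). g \<omega>) =
  (\<Sum>y\<in>UNIV. \<Sum>h1\<in>UNIV. \<Sum>h2\<in>UNIV. \<Sum>p\<in>UNIV. g (y,h1,h2,p))"
  by (simp add: sumbool UNIV_bool UNIV_Times_UNIV[symmetric] sum.cartesian_product add.assoc del: UNIV_Times_UNIV)

lemma sum_set_if: "(\<Sum>\<omega>\<in>{\<omega>. f \<omega> = x}. g \<omega>) = (\<Sum>\<omega>\<in>(UNIV::(bool\<times>bool\<times>bool\<times>bool) set). if f \<omega> = x then g \<omega> else (0::real))"
  by (simp add: sum.If_cases)

definition chi :: "real \<Rightarrow> real \<Rightarrow> real" where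
  "chi pT pF = (if pT + pF = 0 then 0 else (pT - pF)^2 / (pT + pF))"

lemma final_o:
  fixes a0 a1 b0 b1 :: real
  assumes a0: "0 \<le> a0" and a1: "0 \<le> a1"
    and h: "(a0 - a1)^2 + (b0 + b1)^2 \<le> (a0 + a1)^2"
  shows "chi (a1/16) (a0/16) + chi ((a0 - b0 + a1 - b1)/32) ((a0 + b0 + a1 + b1)/32) \<le> (a0 + a1)/16"
proof (cases "a0 + a1 = 0")
  case True
  then show ?thesis unfolding chi_def by (simp add: add_divide_distrib[symmetric])
next
  case False
  then have S: "0 < a0 + a1" using a0 a1 by simp
  have e1: "a1/16 + a0/16 = (a0+a1)/16" by simp
  have e2: "(a0 - b0 + a1 - b1)/32 + (a0 + b0 + a1 + b1)/32 = (a0+a1)/16" by (simp add: field_simps)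
  have e3: "(a0 - b0 + a1 - b1)/32 - (a0 + b0 + a1 + b1)/32 = - (b0+b1)/16" by (simp add: field_simps)
  have "chi (a1/16) (a0/16) + chi ((a0 - b0 + a1 - b1)/32) ((a0 + b0 + a1 + b1)/32)
     = ((a1/16 - a0/16)^2 + (-(b0+b1)/16)^2) / ((a0+a1)/16)"
    unfolding chi_def e1 e2 e3 using S by (simp add: add_divide_distrib)
  also have "\<dots> = ((a0 - a1)^2 + (b0 + b1)^2) / (16 * (a0+a1))" using S by (simp add: field_simps power2_eq_square)
  also have "\<dots> \<le> (a0 + a1)^2 / (16 * (a0+a1))" using h S by (intro divide_right_mono) auto
  also have "\<dots> = (a0+a1)/16"
  proof -
    have nz: "a0 + a1 \<noteq> 0" using S by simp
    have g: "\<And>s::real. s \<noteq> 0 \<Longrightarrow> s^2 / (16 * s) = s / 16" by (simp add: power2_eq_square)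
    show ?thesis by (rule g[OF nz])
  qed
  finally show ?thesis .
qed


theorem proposition1:
  fixes dA :: nat and \<rho> :: "complex mat" and Ms :: "complex mat list"
  assumes "dA \<ge> 1"
    and "density (dA * 4) \<rho>"
    and "povm (dA * 4) Ms"
  shows "info_of dA \<rho> Ms bit_y + info_of dA \<rho> Ms bit_r \<le> 1 \<and>
         info_of dA \<rho> Ms bit_y + info_of dA \<rho> Ms bit_y_xor_r \<le> 1 \<and>
         info_of dA \<rho> Ms bit_y + max (info_of dA \<rho> Ms bit_r) (info_of dA \<rho> Ms bit_y_xor_r) \<le> 1"
proof -
  let ?N = "dA*4"
  let ?L = "length Ms"
  have Rpsd: "psd ?N \<rho>" using assms(2) unfolding density_def by simp
  have Rc: "\<rho> \<in> carrier_mat ?N ?N" using Rpsd unfolding psd_def by simp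
  have Mpsd: "\<And>o'. o' < ?L \<Longrightarrow> psd ?N (Ms ! o')" using assms(3) unfolding povm_def by simp
  have Mc: "\<And>o'. o' < ?L \<Longrightarrow> Ms ! o' \<in> carrier_mat ?N ?N" using Mpsd unfolding psd_def by simp
  define q where "q = (\<lambda>o' y h1 h2 p. Re (Fm ?N (Ms ! o') \<rho> (Ub y h1 h2 p) (Ub y h1 h2 p)))"
  have jp: "joint_prob dA \<rho> Ms (y,h1,h2,p) o' = q o' y h1 h2 p / 16" if o: "o' < ?L" for o' y h1 h2 p
  proof -
    have "mtrace (Ms ! o' * (kron (1\<^sub>m dA) (bob_unitary y h1 h2 p) * \<rho> * Defs.adjoint (kron (1\<^sub>m dA) (bob_unitary y h1 h2 p))))
      = Fm ?N (Ms ! o') \<rho> (Ub y h1 h2 p) (Ub y h1 h2 p)"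
      unfolding Ub_def by (rule trace_reduce[OF Mc[OF o] Rc bob_carrier])
    then show ?thesis unfolding joint_prob_def q_def Let_def by simp
  qed
  have qpos: "0 \<le> q o' y h1 h2 p" if o: "o' < ?L" for o' y h1 h2 p
    unfolding q_def by (rule Fm_pos[OF Mpsd[OF o] Rpsd])
  have qsum: "(\<Sum>o'<?L. q o' y h1 h2 p) = 1" for y h1 h2 p
  proof -
    have "(\<Sum>o'<?L. q o' y h1 h2 p) = Re (\<Sum>o'<?L. Fm ?N (Ms ! o') \<rho> (Ub y h1 h2 p) (Ub y h1 h2 p))"
      unfolding q_def by simp
    also have "\<dots> = 1" using Fm_marg[OF assms(3) assms(2)] by simp
    finally show ?thesis .
  qed
  define A where "A = (\<lambda>o' y. \<Sum>h1\<in>UNIV. \<Sum>h2\<in>UNIV. \<Sum>p\<in>UNIV. q o' y h1 h2 p)"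
  define B where "B = (\<lambda>o' y. \<Sum>h1\<in>UNIV. \<Sum>h2\<in>UNIV. \<Sum>p\<in>UNIV. (if h1 = h2 then 1 else -1) * q o' y h1 h2 p)"
  have Apos: "0 \<le> A o' y" if o: "o' < ?L" for o' y
    unfolding A_def by (intro sum_nonneg qpos[OF o])
  have po: "(A o' False - A o' True)^2 + (B o' False + B o' True)^2 \<le> (A o' False + A o' True)^2"
     "(A o' False - A o' True)^2 + (B o' False - B o' True)^2 \<le> (A o' False + A o' True)^2"
    if o: "o' < ?L" for o'
    unfolding A_def B_def q_def by (rule per_out[OF Fm_pos[OF Mpsd[OF o] Rpsd]])+
  have expand: "stat_joint dA \<rho> Ms f x o' = (\<Sum>y\<in>UNIV. \<Sum>h1\<in>UNIV. \<Sum>h2\<in>UNIV. \<Sum>p\<in>UNIV.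
        if f (y,h1,h2,p) = x then q o' y h1 h2 p / 16 else 0)" if o: "o' < ?L" for f x o'
    unfolding stat_joint_def sum_set_if sum_omega using jp[OF o] by (intro sum.cong refl) presburger
  have sjy: "stat_joint dA \<rho> Ms bit_y x o' = A o' x / 16" if o: "o' < ?L" for x o'
    unfolding expand[OF o] A_def by (cases x) (simp_all add: sumbool bit_y_def add_divide_distrib)
  have sjr: "stat_joint dA \<rho> Ms bit_r x o' = (if x then A o' False - B o' False + A o' True - B o' True
      else A o' False + B o' False + A o' True + B o' True) / 32" if o: "o' < ?L" for x o'
    unfolding expand[OF o] A_def B_def by (cases x) (simp_all add: sumbool bit_r_def field_simps)
  have sjyr: "stat_joint dA \<rho> Ms bit_y_xor_r x o' = (if x then A o' False - B o' False + A o' True - (- B o' True)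
      else A o' False + B o' False + A o' True + (- B o' True)) / 32" if o: "o' < ?L" for x o'
    unfolding expand[OF o] A_def B_def by (cases x) (simp_all add: sumbool bit_y_xor_r_def field_simps)
  have sA: "(\<Sum>o'<?L. A o' y) = 8" for y
    unfolding A_def by (simp add: sumbool sum.distrib qsum)
  have sB: "(\<Sum>o'<?L. B o' y) = 0" for y
    unfolding B_def by (simp add: sumbool sum.distrib qsum sum_negf sum_subtractf)
  have nn: "0 \<le> stat_joint dA \<rho> Ms f x o'" if o: "o' \<in> {..<?L}" for f x o'
    using o unfolding expand[OF o[simplified]] by (intro sum_nonneg) (simp add: qpos)
  have my: "(\<Sum>o'\<in>{..<?L}. stat_joint dA \<rho> Ms bit_y x o') = 1/2" for x
    by (simp add: sjy sum_divide_distrib[symmetric] sA)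
  have mr: "(\<Sum>o'\<in>{..<?L}. stat_joint dA \<rho> Ms bit_r x o') = 1/2" for x
    by (cases x) (simp_all add: sjr sum_divide_distrib[symmetric] sum.distrib sum_subtractf sA sB)
  have myr: "(\<Sum>o'\<in>{..<?L}. stat_joint dA \<rho> Ms bit_y_xor_r x o') = 1/2" for x
    by (cases x) (simp_all add: sjyr sum_divide_distrib[symmetric] sum.distrib sum_subtractf sA sB)
  have Iy: "info_of dA \<rho> Ms bit_y \<le> (\<Sum>o'<?L. chi (A o' True / 16) (A o' False / 16))"
  proof -
    have "info_of dA \<rho> Ms bit_y \<le> (\<Sum>o'<?L. chi (stat_joint dA \<rho> Ms bit_y True o') (stat_joint dA \<rho> Ms bit_y False o'))"
      unfolding info_of_def chi_def by (rule info_bound[OF _ nn my]) simp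
    also have "\<dots> = (\<Sum>o'<?L. chi (A o' True / 16) (A o' False / 16))"
      by (intro sum.cong refl) (simp add: sjy)
    finally show ?thesis .
  qed
  have Ir: "info_of dA \<rho> Ms bit_r \<le> (\<Sum>o'<?L. chi ((A o' False - B o' False + A o' True - B o' True)/32) ((A o' False + B o' False + A o' True + B o' True)/32))"
  proof -
    have "info_of dA \<rho> Ms bit_r \<le> (\<Sum>o'<?L. chi (stat_joint dA \<rho> Ms bit_r True o') (stat_joint dA \<rho> Ms bit_r False o'))"
      unfolding info_of_def chi_def by (rule info_bound[OF _ nn mr]) simp
    also have "\<dots> = (\<Sum>o'<?L. chi ((A o' False - B o' False + A o' True - B o' True)/32) ((A o' False + B o' False + A o' True + B o' True)/32))"
      by (intro sum.cong refl) (simp add: sjr)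
    finally show ?thesis .
  qed
  have Iyr: "info_of dA \<rho> Ms bit_y_xor_r \<le> (\<Sum>o'<?L. chi ((A o' False - B o' False + A o' True - (- B o' True))/32) ((A o' False + B o' False + A o' True + (- B o' True))/32))"
  proof -
    have "info_of dA \<rho> Ms bit_y_xor_r \<le> (\<Sum>o'<?L. chi (stat_joint dA \<rho> Ms bit_y_xor_r True o') (stat_joint dA \<rho> Ms bit_y_xor_r False o'))"
      unfolding info_of_def chi_def by (rule info_bound[OF _ nn myr]) simp
    also have "\<dots> = (\<Sum>o'<?L. chi ((A o' False - B o' False + A o' True - (- B o' True))/32) ((A o' False + B o' False + A o' True + (- B o' True))/32))"
      by (intro sum.cong refl) (simp only: sjyr lessThan_iff if_True if_False)
    finally show ?thesis .
  qed
  have tot: "(\<Sum>o'<?L. (A o' False + A o' True) / 16) = 1"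
    by (simp add: sum_divide_distrib[symmetric] sum.distrib sA)
  have c1: "info_of dA \<rho> Ms bit_y + info_of dA \<rho> Ms bit_r \<le> 1"
  proof -
    have "info_of dA \<rho> Ms bit_y + info_of dA \<rho> Ms bit_r \<le>
       (\<Sum>o'<?L. chi (A o' True / 16) (A o' False / 16) + chi ((A o' False - B o' False + A o' True - B o' True)/32) ((A o' False + B o' False + A o' True + B o' True)/32))"
      using Iy Ir by (simp add: sum.distrib)
    also have "\<dots> \<le> (\<Sum>o'<?L. (A o' False + A o' True) / 16)"
      by (intro sum_mono final_o) (auto intro: Apos po)
    finally show ?thesis using tot by simp
  qed
  have c2: "info_of dA \<rho> Ms bit_y + info_of dA \<rho> Ms bit_y_xor_r \<le> 1"
  proof -
    have "info_of dA \<rho> Ms bit_y + info_of dA \<rho> Ms bit_y_xor_r \<le>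
       (\<Sum>o'<?L. chi (A o' True / 16) (A o' False / 16) + chi ((A o' False - B o' False + A o' True - (- B o' True))/32) ((A o' False + B o' False + A o' True + (- B o' True))/32))"
      using Iy Iyr by (simp only: sum.distrib)
    also have "\<dots> \<le> (\<Sum>o'<?L. (A o' False + A o' True) / 16)"
    proof (intro sum_mono final_o)
      fix o' assume o: "o' \<in> {..<?L}"
      show "0 \<le> A o' False" "0 \<le> A o' True" using Apos o by auto
      show "(A o' False - A o' True)^2 + (B o' False + - B o' True)^2 \<le> (A o' False + A o' True)^2"
        using po(2)[of o'] o by simp
    qed
    finally show ?thesis using tot by simp
  qed
  show ?thesis using c1 c2 by simp
qed


end
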